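(* For every bigroupoid $\mathcal B$ there exist an AU-bigroupoid $\mathcal S\mathcal B$ and weak equivalences (biequivalences) $(E,\epsilon):\mathcal S\mathcal B\to\mathcal B$ and $(S,\sigma):\mathcal B\to\mathcal S\mathcal B$.
   Context: A bigroupoid $\mathcal B$ consists of: a set $\mathcal B_0$ of 0-cells; for each $A,B$ a groupoid $\mathcal B(A,B)$ (objects: 1-cells; arrows: 2-cells); composition functors $*$; identity 1-cells $1_A$; inversion functors $(-)^*$; and natural isomorphisms $\mathbf a:(h*g)*f\Rightarrow h*(g*f)$, $\mathbf l:1_B*f\Rightarrow f$, $\mathbf r:f*1_A\Rightarrow f$, $\mathbf e:f^**f\Rightarrow 1_A$, $\mathbf i:1_B\Rightarrow f*f^*$, such that the pentagon for $\mathbf a$ commutes, $(\mathrm{id}*\mathbf l)\circ\mathbf a=\mathbf r*\mathrm{id}$, and $\mathbf r_f\circ(\mathrm{id}*\mathbf e_f)\circ\mathbf a\circ(\mathbf i_f*\mathrm{id})=\mathbf l_f$. An AU-bigroupoid is a bigroupoid in which $\mathbf a,\mathbf l,\mathbf r$ are identities. A morphism $(F,\phi):\mathcal A\to\mathcal B$ consists of a function on 0-cells, functors $F_{A,A'}:\mathcal A(A,A')\to\mathcal B(FA,FA')$ and natural isomorphisms $\phi_{g,f}:Fg*Ff\Rightarrow F(g*f)$, $\phi_A:1_{FA}\Rightarrow F1_A$, $\phi_f:(Ff)^*\Rightarrow F(f^* )$ satisfying $F\mathbf a\circ\phi\circ(\phi*\mathrm{id})=\phi\circ(\mathrm{id}*\phi)\circ\mathbf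 a$, $F\mathbf r\circ\phi\circ(\mathrm{id}*\phi_A)=\mathbf r$, $F\mathbf l\circ\phi\circ(\phi_B*\mathrm{id})=\mathbf l$, $F\mathbf e\circ\phi\circ(\phi_f*\mathrm{id})=\phi_A\circ\mathbf e$, $F\mathbf i\circ\phi_B=\phi\circ(\mathrm{id}*\phi_f)\circ\mathbf i$. A weak equivalence (biequivalence) $F:\mathcal A\to\mathcal B$ is a morphism such that every 0-cell $B$ of $\mathcal B$ admits a 1-cell $B\to FA'$ for some 0-cell $A'$ of $\mathcal A$, and each $F_{A,A'}$ is an equivalence of categories. *)

theory Defs
  imports Main
begin

text \<open>The hom-groupoid
B(X,Y) has objects hom B X Y and arrows hom2 B f g.  Operations are total HOL
functions; only their values on the relevant carriers matter.\<close>

record ('o,'a,'b) bigroupoid =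
  Obj :: "'o set"
  Arr :: "'a set"
  src :: "'a \<Rightarrow> 'o"
  tgt :: "'a \<Rightarrow> 'o"
  Cell :: "'b set"
  dom2 :: "'b \<Rightarrow> 'a"
  cod2 :: "'b \<Rightarrow> 'a"
  vcomp :: "'b \<Rightarrow> 'b \<Rightarrow> 'b"   (* vcomp B beta alpha = beta o alpha *)
  vid :: "'a \<Rightarrow> 'b"
  hcomp :: "'a \<Rightarrow> 'a \<Rightarrow> 'a"    (* hcomp B g f = g * f *)
  hcomp2 :: "'b \<Rightarrow> 'b \<Rightarrow> 'b"   (* hcomp2 B beta alpha = beta * alpha *)
  idn :: "'o \<Rightarrow> 'a"
  rinv :: "'a \<Rightarrow> 'a"
  rinv2 :: "'b \<Rightarrow> 'b"
  asc :: "'a \<Rightarrow> 'a \<Rightarrow> 'a \<Rightarrow> 'b"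
  lun :: "'a \<Rightarrow> 'b"
  run :: "'a \<Rightarrow> 'b"
  eps :: "'a \<Rightarrow> 'b"
  eta :: "'a \<Rightarrow> 'b"

definition hom :: "('o,'a,'b) bigroupoid \<Rightarrow> 'o \<Rightarrow> 'o \<Rightarrow> 'a set" where
  "hom B X Y = {f \<in> Arr B. src B f = X \<and> tgt B f = Y}"

definition hom2 :: "('o,'a,'b) bigroupoid \<Rightarrow> 'a \<Rightarrow> 'a \<Rightarrow> 'b set" where
  "hom2 B f g = {\<alpha> \<in> Cell B. dom2 B \<alpha> = f \<and> cod2 B \<alpha> = g}"

definition bigroupoid :: "('o,'a,'b) bigroupoid \<Rightarrow> bool" where
  "bigroupoid B \<longleftrightarrow>
    \<comment> \<open>well-formedness of cells\<close>
    (\<forall>f\<in>Arr B. src B f \<in> Obj B \<and> tgt B f \<in> Obj B) \<and>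
    (\<forall>\<alpha>\<in>Cell B. dom2 B \<alpha> \<in> Arr B \<and> cod2 B \<alpha> \<in> Arr B \<and>
        src B (dom2 B \<alpha>) = src B (cod2 B \<alpha>) \<and> tgt B (dom2 B \<alpha>) = tgt B (cod2 B \<alpha>)) \<and>
    \<comment> \<open>each B(X,Y) is a groupoid\<close>
    (\<forall>f\<in>Arr B. vid B f \<in> hom2 B f f) \<and>
    (\<forall>f g h \<alpha> \<beta>. \<alpha> \<in> hom2 B f g \<longrightarrow> \<beta> \<in> hom2 B g h \<longrightarrow> vcomp B \<beta> \<alpha> \<in> hom2 B f h) \<and>
    (\<forall>f g h k \<alpha> \<beta> \<gamma>. \<alpha> \<in> hom2 B f g \<longrightarrow> \<beta> \<in> hom2 B g h \<longrightarrow> \<gamma> \<in> hom2 B h k \<longrightarrow>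
        vcomp B \<gamma> (vcomp B \<beta> \<alpha>) = vcomp B (vcomp B \<gamma> \<beta>) \<alpha>) \<and>
    (\<forall>f g \<alpha>. \<alpha> \<in> hom2 B f g \<longrightarrow> vcomp B (vid B g) \<alpha> = \<alpha> \<and> vcomp B \<alpha> (vid B f) = \<alpha>) \<and>
    (\<forall>f g \<alpha>. \<alpha> \<in> hom2 B f g \<longrightarrow>
        (\<exists>\<beta>\<in>hom2 B g f. vcomp B \<beta> \<alpha> = vid B f \<and> vcomp B \<alpha> \<beta> = vid B g)) \<and>
    \<comment> \<open>composition functors B(Y,Z) x B(X,Y) -> B(X,Z)\<close>
    (\<forall>X Y Z f g. f \<in> hom B X Y \<longrightarrow> g \<in> hom B Y Z \<longrightarrow> hcomp B g f \<in> hom B X Z) \<and>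
    (\<forall>f f' g g' \<alpha> \<beta>. \<alpha> \<in> hom2 B f f' \<longrightarrow> \<beta> \<in> hom2 B g g' \<longrightarrow> tgt B f = src B g \<longrightarrow>
        hcomp2 B \<beta> \<alpha> \<in> hom2 B (hcomp B g f) (hcomp B g' f')) \<and>
    (\<forall>f g. f \<in> Arr B \<longrightarrow> g \<in> Arr B \<longrightarrow> tgt B f = src B g \<longrightarrow>
        hcomp2 B (vid B g) (vid B f) = vid B (hcomp B g f)) \<and>
    (\<forall>f f' f'' g g' g'' \<alpha> \<alpha>' \<beta> \<beta>'. \<alpha> \<in> hom2 B f f' \<longrightarrow> \<alpha>' \<in> hom2 B f' f'' \<longrightarrow>
        \<beta> \<in> hom2 B g g' \<longrightarrow> \<beta>' \<in> hom2 B g' g'' \<longrightarrow> tgt B f = src B g \<longrightarrow>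
        hcomp2 B (vcomp B \<beta>' \<beta>) (vcomp B \<alpha>' \<alpha>) = vcomp B (hcomp2 B \<beta>' \<alpha>') (hcomp2 B \<beta> \<alpha>)) \<and>
    \<comment> \<open>identity 1-cells\<close>
    (\<forall>X\<in>Obj B. idn B X \<in> hom B X X) \<and>
    \<comment> \<open>inversion functors B(X,Y) -> B(Y,X)\<close>
    (\<forall>X Y f. f \<in> hom B X Y \<longrightarrow> rinv B f \<in> hom B Y X) \<and>
    (\<forall>f g \<alpha>. \<alpha> \<in> hom2 B f g \<longrightarrow> rinv2 B \<alpha> \<in> hom2 B (rinv B f) (rinv B g)) \<and>
    (\<forall>f\<in>Arr B. rinv2 B (vid B f) = vid B (rinv B f)) \<and>
    (\<forall>f g h \<alpha> \<beta>. \<alpha> \<in> hom2 B f g \<longrightarrow> \<beta> \<in> hom2 B g h \<longrightarrow>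
        rinv2 B (vcomp B \<beta> \<alpha>) = vcomp B (rinv2 B \<beta>) (rinv2 B \<alpha>)) \<and>
    \<comment> \<open>associator a : (h*g)*f => h*(g*f), natural\<close>
    (\<forall>f g h. f \<in> Arr B \<longrightarrow> g \<in> Arr B \<longrightarrow> h \<in> Arr B \<longrightarrow> tgt B f = src B g \<longrightarrow> tgt B g = src B h \<longrightarrow>
        asc B h g f \<in> hom2 B (hcomp B (hcomp B h g) f) (hcomp B h (hcomp B g f))) \<and>
    (\<forall>f f' g g' h h' \<alpha> \<beta> \<gamma>. \<alpha> \<in> hom2 B f f' \<longrightarrow> \<beta> \<in> hom2 B g g' \<longrightarrow> \<gamma> \<in> hom2 B h h' \<longrightarrow>
        tgt B f = src B g \<longrightarrow> tgt B g = src B h \<longrightarrow>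
        vcomp B (asc B h' g' f') (hcomp2 B (hcomp2 B \<gamma> \<beta>) \<alpha>)
          = vcomp B (hcomp2 B \<gamma> (hcomp2 B \<beta> \<alpha>)) (asc B h g f)) \<and>
    \<comment> \<open>left unitor l : 1_Y * f => f, natural\<close>
    (\<forall>f\<in>Arr B. lun B f \<in> hom2 B (hcomp B (idn B (tgt B f)) f) f) \<and>
    (\<forall>f g \<alpha>. \<alpha> \<in> hom2 B f g \<longrightarrow>
        vcomp B \<alpha> (lun B f) = vcomp B (lun B g) (hcomp2 B (vid B (idn B (tgt B f))) \<alpha>)) \<and>
    \<comment> \<open>right unitor r : f * 1_X => f, natural\<close>
    (\<forall>f\<in>Arr B. run B f \<in> hom2 B (hcomp B f (idn B (src B f))) f) \<and>
    (\<forall>f g \<alpha>. \<alpha> \<in> hom2 B f g \<longrightarrow>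
        vcomp B \<alpha> (run B f) = vcomp B (run B g) (hcomp2 B \<alpha> (vid B (idn B (src B f))))) \<and>
    \<comment> \<open>e : f^star * f => 1_X, natural\<close>
    (\<forall>f\<in>Arr B. eps B f \<in> hom2 B (hcomp B (rinv B f) f) (idn B (src B f))) \<and>
    (\<forall>f g \<alpha>. \<alpha> \<in> hom2 B f g \<longrightarrow> vcomp B (eps B g) (hcomp2 B (rinv2 B \<alpha>) \<alpha>) = eps B f) \<and>
    \<comment> \<open>i : 1_Y => f * f^star, natural\<close>
    (\<forall>f\<in>Arr B. eta B f \<in> hom2 B (idn B (tgt B f)) (hcomp B f (rinv B f))) \<and>
    (\<forall>f g \<alpha>. \<alpha> \<in> hom2 B f g \<longrightarrow> vcomp B (hcomp2 B \<alpha> (rinv2 B \<alpha>)) (eta B f) = eta B g) \<and>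
    \<comment> \<open>pentagon\<close>
    (\<forall>f g h k. f \<in> Arr B \<longrightarrow> g \<in> Arr B \<longrightarrow> h \<in> Arr B \<longrightarrow> k \<in> Arr B \<longrightarrow>
        tgt B f = src B g \<longrightarrow> tgt B g = src B h \<longrightarrow> tgt B h = src B k \<longrightarrow>
        vcomp B (asc B k h (hcomp B g f)) (asc B (hcomp B k h) g f)
          = vcomp B (hcomp2 B (vid B k) (asc B h g f))
              (vcomp B (asc B k (hcomp B h g) f) (hcomp2 B (asc B k h g) (vid B f)))) \<and>
    \<comment> \<open>(id * l) o a = r * id\<close>
    (\<forall>f g. f \<in> Arr B \<longrightarrow> g \<in> Arr B \<longrightarrow> tgt B f = src B g \<longrightarrow>
        vcomp B (hcomp2 B (vid B g) (lun B f)) (asc B g (idn B (tgt B f)) f)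
          = hcomp2 B (run B g) (vid B f)) \<and>
    \<comment> \<open>r_f o (id * e_f) o a o (i_f * id) = l_f\<close>
    (\<forall>f\<in>Arr B. vcomp B (run B f) (vcomp B (hcomp2 B (vid B f) (eps B f))
        (vcomp B (asc B f (rinv B f) f) (hcomp2 B (eta B f) (vid B f)))) = lun B f)"

definition au_bigroupoid :: "('o,'a,'b) bigroupoid \<Rightarrow> bool" where
  "au_bigroupoid B \<longleftrightarrow> bigroupoid B \<and>
    (\<forall>f g h. f \<in> Arr B \<longrightarrow> g \<in> Arr B \<longrightarrow> h \<in> Arr B \<longrightarrow> tgt B f = src B g \<longrightarrow> tgt B g = src B h \<longrightarrow>
        asc B h g f = vid B (hcomp B (hcomp B h g) f)) \<and>
    (\<forall>f\<in>Arr B. lun B f = vid B f \<and> run B f = vid B f)"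

record ('o,'a,'b,'p,'c,'d) bmorph =
  F0 :: "'o \<Rightarrow> 'p"
  F1 :: "'a \<Rightarrow> 'c"
  F2 :: "'b \<Rightarrow> 'd"
  phi :: "'a \<Rightarrow> 'a \<Rightarrow> 'd"
  phi0 :: "'o \<Rightarrow> 'd"
  phiI :: "'a \<Rightarrow> 'd"

definition bmorphism ::
  "('o,'a,'b) bigroupoid \<Rightarrow> ('p,'c,'d) bigroupoid \<Rightarrow> ('o,'a,'b,'p,'c,'d) bmorph \<Rightarrow> bool" where
  "bmorphism A B F \<longleftrightarrow>
    (\<forall>X\<in>Obj A. F0 F X \<in> Obj B) \<and>
    \<comment> \<open>functors F_{X,X'} : A(X,X') -> B(FX,FX')\<close>
    (\<forall>X Y f. f \<in> hom A X Y \<longrightarrow> F1 F f \<in> hom B (F0 F X) (F0 F Y)) \<and>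
    (\<forall>f g \<alpha>. \<alpha> \<in> hom2 A f g \<longrightarrow> F2 F \<alpha> \<in> hom2 B (F1 F f) (F1 F g)) \<and>
    (\<forall>f\<in>Arr A. F2 F (vid A f) = vid B (F1 F f)) \<and>
    (\<forall>f g h \<alpha> \<beta>. \<alpha> \<in> hom2 A f g \<longrightarrow> \<beta> \<in> hom2 A g h \<longrightarrow>
        F2 F (vcomp A \<beta> \<alpha>) = vcomp B (F2 F \<beta>) (F2 F \<alpha>)) \<and>
    \<comment> \<open>phi_{g,f}, natural\<close>
    (\<forall>f g. f \<in> Arr A \<longrightarrow> g \<in> Arr A \<longrightarrow> tgt A f = src A g \<longrightarrow>
        phi F g f \<in> hom2 B (hcomp B (F1 F g) (F1 F f)) (F1 F (hcomp A g f))) \<and>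
    (\<forall>f f' g g' \<alpha> \<beta>. \<alpha> \<in> hom2 A f f' \<longrightarrow> \<beta> \<in> hom2 A g g' \<longrightarrow> tgt A f = src A g \<longrightarrow>
        vcomp B (F2 F (hcomp2 A \<beta> \<alpha>)) (phi F g f) = vcomp B (phi F g' f') (hcomp2 B (F2 F \<beta>) (F2 F \<alpha>))) \<and>
    \<comment> \<open>phi_X\<close>
    (\<forall>X\<in>Obj A. phi0 F X \<in> hom2 B (idn B (F0 F X)) (F1 F (idn A X))) \<and>
    \<comment> \<open>phi_f, natural\<close>
    (\<forall>f\<in>Arr A. phiI F f \<in> hom2 B (rinv B (F1 F f)) (F1 F (rinv A f))) \<and>
    (\<forall>f g \<alpha>. \<alpha> \<in> hom2 A f g \<longrightarrow>
        vcomp B (F2 F (rinv2 A \<alpha>)) (phiI F f) = vcomp B (phiI F g) (rinv2 B (F2 F \<alpha>))) \<and>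
    \<comment> \<open>F a o phi o (phi * id) = phi o (id * phi) o a\<close>
    (\<forall>f g h. f \<in> Arr A \<longrightarrow> g \<in> Arr A \<longrightarrow> h \<in> Arr A \<longrightarrow> tgt A f = src A g \<longrightarrow> tgt A g = src A h \<longrightarrow>
        vcomp B (F2 F (asc A h g f))
          (vcomp B (phi F (hcomp A h g) f) (hcomp2 B (phi F h g) (vid B (F1 F f))))
        = vcomp B (phi F h (hcomp A g f))
          (vcomp B (hcomp2 B (vid B (F1 F h)) (phi F g f)) (asc B (F1 F h) (F1 F g) (F1 F f)))) \<and>
    \<comment> \<open>F r o phi o (id * phi_X) = r\<close>
    (\<forall>f\<in>Arr A. vcomp B (F2 F (run A f))
        (vcomp B (phi F f (idn A (src A f))) (hcomp2 B (vid B (F1 F f)) (phi0 F (src A f))))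
        = run B (F1 F f)) \<and>
    \<comment> \<open>F l o phi o (phi_Y * id) = l\<close>
    (\<forall>f\<in>Arr A. vcomp B (F2 F (lun A f))
        (vcomp B (phi F (idn A (tgt A f)) f) (hcomp2 B (phi0 F (tgt A f)) (vid B (F1 F f))))
        = lun B (F1 F f)) \<and>
    \<comment> \<open>F e o phi o (phi_f * id) = phi_X o e\<close>
    (\<forall>f\<in>Arr A. vcomp B (F2 F (eps A f))
        (vcomp B (phi F (rinv A f) f) (hcomp2 B (phiI F f) (vid B (F1 F f))))
        = vcomp B (phi0 F (src A f)) (eps B (F1 F f))) \<and>
    \<comment> \<open>F i o phi_Y = phi o (id * phi_f) o i\<close>
    (\<forall>f\<in>Arr A. vcomp B (F2 F (eta A f)) (phi0 F (tgt A f))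
        = vcomp B (phi F f (rinv A f))
            (vcomp B (hcomp2 B (vid B (F1 F f)) (phiI F f)) (eta B (F1 F f))))"

text \<open>F_{X,X'} : A(X,X') -> B(FX,FX') is an equivalence of categories: there is a functor
G back and natural transformations (automatically isomorphisms, since all 2-cells are
invertible) eta : Id => G F and eps : F G => Id.\<close>

definition hom_equivalence ::
  "('o,'a,'b) bigroupoid \<Rightarrow> ('p,'c,'d) bigroupoid \<Rightarrow> ('o,'a,'b,'p,'c,'d) bmorph \<Rightarrow> 'o \<Rightarrow> 'o \<Rightarrow> bool" where
  "hom_equivalence A B F X X' \<longleftrightarrow>
    (\<exists>(G1 :: 'c \<Rightarrow> 'a) (G2 :: 'd \<Rightarrow> 'b) (u :: 'a \<Rightarrow> 'b) (c :: 'c \<Rightarrow> 'd).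
      (\<forall>h\<in>hom B (F0 F X) (F0 F X'). G1 h \<in> hom A X X') \<and>
      (\<forall>h h' \<gamma>. h \<in> hom B (F0 F X) (F0 F X') \<longrightarrow> \<gamma> \<in> hom2 B h h' \<longrightarrow>
          G2 \<gamma> \<in> hom2 A (G1 h) (G1 h')) \<and>
      (\<forall>h\<in>hom B (F0 F X) (F0 F X'). G2 (vid B h) = vid A (G1 h)) \<and>
      (\<forall>h h' h'' \<gamma> \<delta>. h \<in> hom B (F0 F X) (F0 F X') \<longrightarrow> \<gamma> \<in> hom2 B h h' \<longrightarrow> \<delta> \<in> hom2 B h' h'' \<longrightarrow>
          G2 (vcomp B \<delta> \<gamma>) = vcomp A (G2 \<delta>) (G2 \<gamma>)) \<and>
      (\<forall>f\<in>hom A X X'. u f \<in> hom2 A f (G1 (F1 F f))) \<and>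
      (\<forall>f g \<alpha>. f \<in> hom A X X' \<longrightarrow> \<alpha> \<in> hom2 A f g \<longrightarrow>
          vcomp A (G2 (F2 F \<alpha>)) (u f) = vcomp A (u g) \<alpha>) \<and>
      (\<forall>h\<in>hom B (F0 F X) (F0 F X'). c h \<in> hom2 B (F1 F (G1 h)) h) \<and>
      (\<forall>h h' \<gamma>. h \<in> hom B (F0 F X) (F0 F X') \<longrightarrow> \<gamma> \<in> hom2 B h h' \<longrightarrow>
          vcomp B \<gamma> (c h) = vcomp B (c h') (F2 F (G2 \<gamma>))))"

definition weak_equivalence ::
  "('o,'a,'b) bigroupoid \<Rightarrow> ('p,'c,'d) bigroupoid \<Rightarrow> ('o,'a,'b,'p,'c,'d) bmorph \<Rightarrow> bool" where
  "weak_equivalence A B F \<longleftrightarrow> bmorphism A B F \<and>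
    (\<forall>Y\<in>Obj B. \<exists>X\<in>Obj A. hom B Y (F0 F X) \<noteq> {}) \<and>
    (\<forall>X\<in>Obj A. \<forall>X'\<in>Obj A. hom_equivalence A B F X X')"

end

theory Submission
  imports Defs
begin


locale bg =
  fixes B :: "('o,'a,'b) bigroupoid"
  assumes BG: "bigroupoid B"
begin

abbreviation "V \<equiv> vcomp B"
abbreviation "H \<equiv> hcomp2 B"
abbreviation "I \<equiv> vid B"
abbreviation "hc \<equiv> hcomp B"
abbreviation "d2 \<equiv> dom2 B"
abbreviation "c2 \<equiv> cod2 B"
abbreviation "s \<equiv> src B"
abbreviation "t \<equiv> tgt B"

lemmas ax = BG[unfolded bigroupoid_def]
lemmas r0 = ax
lemmas a1 = r0[THEN conjunct1]
lemmas r1 = r0[THEN conjunct2]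
lemmas a2 = r1[THEN conjunct1]
lemmas r2 = r1[THEN conjunct2]
lemmas a3 = r2[THEN conjunct1]
lemmas r3 = r2[THEN conjunct2]
lemmas a4 = r3[THEN conjunct1]
lemmas r4 = r3[THEN conjunct2]
lemmas a5 = r4[THEN conjunct1]
lemmas r5 = r4[THEN conjunct2]
lemmas a6 = r5[THEN conjunct1]
lemmas r6 = r5[THEN conjunct2]
lemmas a7 = r6[THEN conjunct1]
lemmas r7 = r6[THEN conjunct2]
lemmas a8 = r7[THEN conjunct1]
lemmas r8 = r7[THEN conjunct2]
lemmas a9 = r8[THEN conjunct1]
lemmas r9 = r8[THEN conjunct2]
lemmas a10 = r9[THEN conjunct1]
lemmas r10 = r9[THEN conjunct2]
lemmas a11 = r10[THEN conjunct1]
lemmas r11 = r10[THEN conjunct2]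
lemmas a12 = r11[THEN conjunct1]
lemmas r12 = r11[THEN conjunct2]
lemmas a13 = r12[THEN conjunct1]
lemmas r13 = r12[THEN conjunct2]
lemmas a14 = r13[THEN conjunct1]
lemmas r14 = r13[THEN conjunct2]
lemmas a15 = r14[THEN conjunct1]
lemmas r15 = r14[THEN conjunct2]
lemmas a16 = r15[THEN conjunct1]
lemmas r16 = r15[THEN conjunct2]
lemmas a17 = r16[THEN conjunct1]
lemmas r17 = r16[THEN conjunct2]
lemmas a18 = r17[THEN conjunct1]
lemmas r18 = r17[THEN conjunct2]
lemmas a19 = r18[THEN conjunct1]
lemmas r19 = r18[THEN conjunct2]
lemmas a20 = r19[THEN conjunct1]
lemmas r20 = r19[THEN conjunct2]
lemmas a21 = r20[THEN conjunct1]
lemmas r21 = r20[THEN conjunct2]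
lemmas a22 = r21[THEN conjunct1]
lemmas r22 = r21[THEN conjunct2]
lemmas a23 = r22[THEN conjunct1]
lemmas r23 = r22[THEN conjunct2]
lemmas a24 = r23[THEN conjunct1]
lemmas r24 = r23[THEN conjunct2]
lemmas a25 = r24[THEN conjunct1]
lemmas r25 = r24[THEN conjunct2]
lemmas a26 = r25[THEN conjunct1]
lemmas r26 = r25[THEN conjunct2]
lemmas a27 = r26[THEN conjunct1]
lemmas r27 = r26[THEN conjunct2]
lemmas a28 = r27[THEN conjunct1]
lemmas r28 = r27[THEN conjunct2]
lemmas a29 = r28

lemma arr_st: "f \<in> Arr B \<Longrightarrow> s f \<in> Obj B \<and> t f \<in> Obj B" using a1 by blast
lemma cell_wf: "\<alpha> \<in> Cell B \<Longrightarrow> d2 \<alpha> \<in> Arr B \<and> c2 \<alpha> \<in> Arr B \<and> s (d2 \<alpha>) = s (c2 \<alpha>) \<and> t (d2 \<alpha>) = t (c2 \<alpha>)"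
  using a2 by blast
lemma vid_h: "f \<in> Arr B \<Longrightarrow> I f \<in> hom2 B f f" using a3 by blast
lemma vcomp_h: "\<alpha> \<in> hom2 B f g \<Longrightarrow> \<beta> \<in> hom2 B g h \<Longrightarrow> V \<beta> \<alpha> \<in> hom2 B f h" using a4 by blast
lemma vassoc_h: "\<alpha> \<in> hom2 B f g \<Longrightarrow> \<beta> \<in> hom2 B g h \<Longrightarrow> \<gamma> \<in> hom2 B h k \<Longrightarrow> V \<gamma> (V \<beta> \<alpha>) = V (V \<gamma> \<beta>) \<alpha>"
  using a5 by blast
lemma vunit_h: "\<alpha> \<in> hom2 B f g \<Longrightarrow> V (I g) \<alpha> = \<alpha> \<and> V \<alpha> (I f) = \<alpha>" using a6 by blast
lemma vinv_h: "\<alpha> \<in> hom2 B f g \<Longrightarrow> \<exists>\<beta>\<in>hom2 B g f. V \<beta> \<alpha> = I f \<and> V \<alpha> \<beta> = I g" using a7 by blast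
lemma hcomp_h: "f \<in> hom B X Y \<Longrightarrow> g \<in> hom B Y Z \<Longrightarrow> hc g f \<in> hom B X Z" using a8 by blast
lemma hcomp2_h: "\<alpha> \<in> hom2 B f f' \<Longrightarrow> \<beta> \<in> hom2 B g g' \<Longrightarrow> t f = s g \<Longrightarrow> H \<beta> \<alpha> \<in> hom2 B (hc g f) (hc g' f')"
  using a9 by blast
lemma hvid_h: "f \<in> Arr B \<Longrightarrow> g \<in> Arr B \<Longrightarrow> t f = s g \<Longrightarrow> H (I g) (I f) = I (hc g f)" using a10 by blast
lemma interchange_h: "\<alpha> \<in> hom2 B f f' \<Longrightarrow> \<alpha>' \<in> hom2 B f' f'' \<Longrightarrow> \<beta> \<in> hom2 B g g' \<Longrightarrow> \<beta>' \<in> hom2 B g' g'' \<Longrightarrow> t f = s g \<Longrightarrow>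
   H (V \<beta>' \<beta>) (V \<alpha>' \<alpha>) = V (H \<beta>' \<alpha>') (H \<beta> \<alpha>)" using a11 by blast
lemma idn_h: "X \<in> Obj B \<Longrightarrow> idn B X \<in> hom B X X" using a12 by blast
lemma rinv_h: "f \<in> hom B X Y \<Longrightarrow> rinv B f \<in> hom B Y X" using a13 by blast
lemma rinv2_h: "\<alpha> \<in> hom2 B f g \<Longrightarrow> rinv2 B \<alpha> \<in> hom2 B (rinv B f) (rinv B g)" using a14 by blast
lemma rinv2_vid: "f \<in> Arr B \<Longrightarrow> rinv2 B (I f) = I (rinv B f)" using a15 by blast
lemma rinv2_vcomp_h: "\<alpha> \<in> hom2 B f g \<Longrightarrow> \<beta> \<in> hom2 B g h \<Longrightarrow> rinv2 B (V \<beta> \<alpha>) = V (rinv2 B \<beta>) (rinv2 B \<alpha>)" using a16 by blast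
lemma asc_h: "f \<in> Arr B \<Longrightarrow> g \<in> Arr B \<Longrightarrow> h \<in> Arr B \<Longrightarrow> t f = s g \<Longrightarrow> t g = s h \<Longrightarrow>
   asc B h g f \<in> hom2 B (hc (hc h g) f) (hc h (hc g f))" using a17 by blast
lemma asc_nat_h: "\<alpha> \<in> hom2 B f f' \<Longrightarrow> \<beta> \<in> hom2 B g g' \<Longrightarrow> \<gamma> \<in> hom2 B h h' \<Longrightarrow> t f = s g \<Longrightarrow> t g = s h \<Longrightarrow>
   V (asc B h' g' f') (H (H \<gamma> \<beta>) \<alpha>) = V (H \<gamma> (H \<beta> \<alpha>)) (asc B h g f)" using a18 by blast
lemma lun_h: "f \<in> Arr B \<Longrightarrow> lun B f \<in> hom2 B (hc (idn B (t f)) f) f" using a19 by blast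
lemma lun_nat_h: "\<alpha> \<in> hom2 B f g \<Longrightarrow> V \<alpha> (lun B f) = V (lun B g) (H (I (idn B (t f))) \<alpha>)" using a20 by blast
lemma run_h: "f \<in> Arr B \<Longrightarrow> run B f \<in> hom2 B (hc f (idn B (s f))) f" using a21 by blast
lemma run_nat_h: "\<alpha> \<in> hom2 B f g \<Longrightarrow> V \<alpha> (run B f) = V (run B g) (H \<alpha> (I (idn B (s f))))" using a22 by blast
lemma eps_h: "f \<in> Arr B \<Longrightarrow> eps B f \<in> hom2 B (hc (rinv B f) f) (idn B (s f))" using a23 by blast
lemma eps_nat_h: "\<alpha> \<in> hom2 B f g \<Longrightarrow> V (eps B g) (H (rinv2 B \<alpha>) \<alpha>) = eps B f" using a24 by blast
lemma eta_h: "f \<in> Arr B \<Longrightarrow> eta B f \<in> hom2 B (idn B (t f)) (hc f (rinv B f))" using a25 by blast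
lemma eta_nat_h: "\<alpha> \<in> hom2 B f g \<Longrightarrow> V (H \<alpha> (rinv2 B \<alpha>)) (eta B f) = eta B g" using a26 by blast
lemma pentagon: "f \<in> Arr B \<Longrightarrow> g \<in> Arr B \<Longrightarrow> h \<in> Arr B \<Longrightarrow> k \<in> Arr B \<Longrightarrow>
        t f = s g \<Longrightarrow> t g = s h \<Longrightarrow> t h = s k \<Longrightarrow>
        V (asc B k h (hc g f)) (asc B (hc k h) g f)
          = V (H (I k) (asc B h g f)) (V (asc B k (hc h g) f) (H (asc B k h g) (I f)))" using a27 by blast
lemma triangle: "f \<in> Arr B \<Longrightarrow> g \<in> Arr B \<Longrightarrow> t f = s g \<Longrightarrow>
        V (H (I g) (lun B f)) (asc B g (idn B (t f)) f) = H (run B g) (I f)" using a28 by blast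
lemma zigzag: "f \<in> Arr B \<Longrightarrow> V (run B f) (V (H (I f) (eps B f))
        (V (asc B f (rinv B f) f) (H (eta B f) (I f)))) = lun B f" using a29 by blast

lemma hom2_iff: "\<alpha> \<in> hom2 B f g \<longleftrightarrow> \<alpha> \<in> Cell B \<and> d2 \<alpha> = f \<and> c2 \<alpha> = g" by (auto simp: hom2_def)
lemma hom_iff: "f \<in> hom B X Y \<longleftrightarrow> f \<in> Arr B \<and> s f = X \<and> t f = Y" by (auto simp: hom_def)

lemma C_d2[simp]: "\<alpha> \<in> Cell B \<Longrightarrow> d2 \<alpha> \<in> Arr B" using cell_wf by blast
lemma C_c2[simp]: "\<alpha> \<in> Cell B \<Longrightarrow> c2 \<alpha> \<in> Arr B" using cell_wf by blast
lemma C_sc[simp]: "\<alpha> \<in> Cell B \<Longrightarrow> s (c2 \<alpha>) = s (d2 \<alpha>)" using cell_wf by metis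
lemma C_tc[simp]: "\<alpha> \<in> Cell B \<Longrightarrow> t (c2 \<alpha>) = t (d2 \<alpha>)" using cell_wf by metis
lemma A_s[simp]: "f \<in> Arr B \<Longrightarrow> s f \<in> Obj B" using arr_st by blast
lemma A_t[simp]: "f \<in> Arr B \<Longrightarrow> t f \<in> Obj B" using arr_st by blast

lemma I_C[simp]: "f \<in> Arr B \<Longrightarrow> I f \<in> Cell B" using vid_h hom2_iff by blast
lemma I_d[simp]: "f \<in> Arr B \<Longrightarrow> d2 (I f) = f" using vid_h hom2_iff by blast
lemma I_c[simp]: "f \<in> Arr B \<Longrightarrow> c2 (I f) = f" using vid_h hom2_iff by blast

lemma V_C[simp]: "\<alpha> \<in> Cell B \<Longrightarrow> \<beta> \<in> Cell B \<Longrightarrow> d2 \<beta> = c2 \<alpha> \<Longrightarrow> V \<beta> \<alpha> \<in> Cell B"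
  using vcomp_h[of \<alpha> "d2 \<alpha>" "c2 \<alpha>" \<beta> "c2 \<beta>"] hom2_iff by auto
lemma V_d[simp]: "\<alpha> \<in> Cell B \<Longrightarrow> \<beta> \<in> Cell B \<Longrightarrow> d2 \<beta> = c2 \<alpha> \<Longrightarrow> d2 (V \<beta> \<alpha>) = d2 \<alpha>"
  using vcomp_h[of \<alpha> "d2 \<alpha>" "c2 \<alpha>" \<beta> "c2 \<beta>"] hom2_iff by auto
lemma V_c[simp]: "\<alpha> \<in> Cell B \<Longrightarrow> \<beta> \<in> Cell B \<Longrightarrow> d2 \<beta> = c2 \<alpha> \<Longrightarrow> c2 (V \<beta> \<alpha>) = c2 \<beta>"
  using vcomp_h[of \<alpha> "d2 \<alpha>" "c2 \<alpha>" \<beta> "c2 \<beta>"] hom2_iff by auto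

lemma hc_A[simp]: "f \<in> Arr B \<Longrightarrow> g \<in> Arr B \<Longrightarrow> t f = s g \<Longrightarrow> hc g f \<in> Arr B"
  using hcomp_h[of f "s f" "t f" g "t g"] hom_iff by auto
lemma hc_s[simp]: "f \<in> Arr B \<Longrightarrow> g \<in> Arr B \<Longrightarrow> t f = s g \<Longrightarrow> s (hc g f) = s f"
  using hcomp_h[of f "s f" "t f" g "t g"] hom_iff by auto
lemma hc_t[simp]: "f \<in> Arr B \<Longrightarrow> g \<in> Arr B \<Longrightarrow> t f = s g \<Longrightarrow> t (hc g f) = t g"
  using hcomp_h[of f "s f" "t f" g "t g"] hom_iff by auto

lemma H_C[simp]: "\<alpha> \<in> Cell B \<Longrightarrow> \<beta> \<in> Cell B \<Longrightarrow> t (d2 \<alpha>) = s (d2 \<beta>) \<Longrightarrow> H \<beta> \<alpha> \<in> Cell B"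
  using hcomp2_h[of \<alpha> "d2 \<alpha>" "c2 \<alpha>" \<beta> "d2 \<beta>" "c2 \<beta>"] hom2_iff by auto
lemma H_d[simp]: "\<alpha> \<in> Cell B \<Longrightarrow> \<beta> \<in> Cell B \<Longrightarrow> t (d2 \<alpha>) = s (d2 \<beta>) \<Longrightarrow> d2 (H \<beta> \<alpha>) = hc (d2 \<beta>) (d2 \<alpha>)"
  using hcomp2_h[of \<alpha> "d2 \<alpha>" "c2 \<alpha>" \<beta> "d2 \<beta>" "c2 \<beta>"] hom2_iff by auto
lemma H_c[simp]: "\<alpha> \<in> Cell B \<Longrightarrow> \<beta> \<in> Cell B \<Longrightarrow> t (d2 \<alpha>) = s (d2 \<beta>) \<Longrightarrow> c2 (H \<beta> \<alpha>) = hc (c2 \<beta>) (c2 \<alpha>)"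
  using hcomp2_h[of \<alpha> "d2 \<alpha>" "c2 \<alpha>" \<beta> "d2 \<beta>" "c2 \<beta>"] hom2_iff by auto

lemma idn_A[simp]: "X \<in> Obj B \<Longrightarrow> idn B X \<in> Arr B" using idn_h hom_iff by blast
lemma idn_s[simp]: "X \<in> Obj B \<Longrightarrow> s (idn B X) = X" using idn_h hom_iff by blast
lemma idn_t[simp]: "X \<in> Obj B \<Longrightarrow> t (idn B X) = X" using idn_h hom_iff by blast

lemma rinv_A[simp]: "f \<in> Arr B \<Longrightarrow> rinv B f \<in> Arr B" using rinv_h[of f "s f" "t f"] hom_iff by blast
lemma rinv_s[simp]: "f \<in> Arr B \<Longrightarrow> s (rinv B f) = t f" using rinv_h[of f "s f" "t f"] hom_iff by blast
lemma rinv_t[simp]: "f \<in> Arr B \<Longrightarrow> t (rinv B f) = s f" using rinv_h[of f "s f" "t f"] hom_iff by blast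

lemma rinv2_C[simp]: "\<alpha> \<in> Cell B \<Longrightarrow> rinv2 B \<alpha> \<in> Cell B" using rinv2_h[of \<alpha> "d2 \<alpha>" "c2 \<alpha>"] hom2_iff by blast
lemma rinv2_d[simp]: "\<alpha> \<in> Cell B \<Longrightarrow> d2 (rinv2 B \<alpha>) = rinv B (d2 \<alpha>)" using rinv2_h[of \<alpha> "d2 \<alpha>" "c2 \<alpha>"] hom2_iff by blast
lemma rinv2_c[simp]: "\<alpha> \<in> Cell B \<Longrightarrow> c2 (rinv2 B \<alpha>) = rinv B (c2 \<alpha>)" using rinv2_h[of \<alpha> "d2 \<alpha>" "c2 \<alpha>"] hom2_iff by blast

lemma asc_C[simp]: "f \<in> Arr B \<Longrightarrow> g \<in> Arr B \<Longrightarrow> h \<in> Arr B \<Longrightarrow> t f = s g \<Longrightarrow> t g = s h \<Longrightarrow> asc B h g f \<in> Cell B"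
  using asc_h hom2_iff by blast
lemma asc_d[simp]: "f \<in> Arr B \<Longrightarrow> g \<in> Arr B \<Longrightarrow> h \<in> Arr B \<Longrightarrow> t f = s g \<Longrightarrow> t g = s h \<Longrightarrow> d2 (asc B h g f) = hc (hc h g) f"
  using asc_h hom2_iff by blast
lemma asc_c[simp]: "f \<in> Arr B \<Longrightarrow> g \<in> Arr B \<Longrightarrow> h \<in> Arr B \<Longrightarrow> t f = s g \<Longrightarrow> t g = s h \<Longrightarrow> c2 (asc B h g f) = hc h (hc g f)"
  using asc_h hom2_iff by blast

lemma lun_C[simp]: "f \<in> Arr B \<Longrightarrow> lun B f \<in> Cell B" using lun_h hom2_iff by blast
lemma lun_d[simp]: "f \<in> Arr B \<Longrightarrow> d2 (lun B f) = hc (idn B (t f)) f" using lun_h hom2_iff by blast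
lemma lun_c[simp]: "f \<in> Arr B \<Longrightarrow> c2 (lun B f) = f" using lun_h hom2_iff by blast
lemma run_C[simp]: "f \<in> Arr B \<Longrightarrow> run B f \<in> Cell B" using run_h hom2_iff by blast
lemma run_d[simp]: "f \<in> Arr B \<Longrightarrow> d2 (run B f) = hc f (idn B (s f))" using run_h hom2_iff by blast
lemma run_c[simp]: "f \<in> Arr B \<Longrightarrow> c2 (run B f) = f" using run_h hom2_iff by blast
lemma eps_C[simp]: "f \<in> Arr B \<Longrightarrow> eps B f \<in> Cell B" using eps_h hom2_iff by blast
lemma eps_d[simp]: "f \<in> Arr B \<Longrightarrow> d2 (eps B f) = hc (rinv B f) f" using eps_h hom2_iff by blast
lemma eps_c[simp]: "f \<in> Arr B \<Longrightarrow> c2 (eps B f) = idn B (s f)" using eps_h hom2_iff by blast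
lemma eta_C[simp]: "f \<in> Arr B \<Longrightarrow> eta B f \<in> Cell B" using eta_h hom2_iff by blast
lemma eta_d[simp]: "f \<in> Arr B \<Longrightarrow> d2 (eta B f) = idn B (t f)" using eta_h hom2_iff by blast
lemma eta_c[simp]: "f \<in> Arr B \<Longrightarrow> c2 (eta B f) = hc f (rinv B f)" using eta_h hom2_iff by blast

lemma vassoc: "\<alpha> \<in> Cell B \<Longrightarrow> \<beta> \<in> Cell B \<Longrightarrow> \<gamma> \<in> Cell B \<Longrightarrow> d2 \<beta> = c2 \<alpha> \<Longrightarrow> d2 \<gamma> = c2 \<beta> \<Longrightarrow>
   V (V \<gamma> \<beta>) \<alpha> = V \<gamma> (V \<beta> \<alpha>)"
  using vassoc_h[of \<alpha> "d2 \<alpha>" "c2 \<alpha>" \<beta> "c2 \<beta>" \<gamma> "c2 \<gamma>"] hom2_iff by auto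
lemma vunitL[simp]: "\<alpha> \<in> Cell B \<Longrightarrow> c2 \<alpha> = f \<Longrightarrow> V (I f) \<alpha> = \<alpha>"
  using vunit_h[of \<alpha> "d2 \<alpha>" "c2 \<alpha>"] hom2_iff by auto
lemma vunitR[simp]: "\<alpha> \<in> Cell B \<Longrightarrow> d2 \<alpha> = f \<Longrightarrow> V \<alpha> (I f) = \<alpha>"
  using vunit_h[of \<alpha> "d2 \<alpha>" "c2 \<alpha>"] hom2_iff by auto
lemma HII[simp]: "f \<in> Arr B \<Longrightarrow> g \<in> Arr B \<Longrightarrow> t f = s g \<Longrightarrow> H (I g) (I f) = I (hc g f)" using hvid_h by blast
lemma interchange: "\<alpha> \<in> Cell B \<Longrightarrow> \<alpha>' \<in> Cell B \<Longrightarrow> \<beta> \<in> Cell B \<Longrightarrow> \<beta>' \<in> Cell B \<Longrightarrow>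
   d2 \<alpha>' = c2 \<alpha> \<Longrightarrow> d2 \<beta>' = c2 \<beta> \<Longrightarrow> t (d2 \<alpha>) = s (d2 \<beta>) \<Longrightarrow>
   H (V \<beta>' \<beta>) (V \<alpha>' \<alpha>) = V (H \<beta>' \<alpha>') (H \<beta> \<alpha>)"
  using interchange_h[of \<alpha> "d2 \<alpha>" "c2 \<alpha>" \<alpha>' "c2 \<alpha>'" \<beta> "d2 \<beta>" "c2 \<beta>" \<beta>' "c2 \<beta>'"] hom2_iff by auto
lemma rinv2_V: "\<alpha> \<in> Cell B \<Longrightarrow> \<beta> \<in> Cell B \<Longrightarrow> d2 \<beta> = c2 \<alpha> \<Longrightarrow> rinv2 B (V \<beta> \<alpha>) = V (rinv2 B \<beta>) (rinv2 B \<alpha>)"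
  using rinv2_vcomp_h[of \<alpha> "d2 \<alpha>" "c2 \<alpha>" \<beta> "c2 \<beta>"] hom2_iff by auto
lemma rinv2_I[simp]: "f \<in> Arr B \<Longrightarrow> rinv2 B (I f) = I (rinv B f)" using rinv2_vid by blast
lemma asc_nat: "\<alpha> \<in> Cell B \<Longrightarrow> \<beta> \<in> Cell B \<Longrightarrow> \<gamma> \<in> Cell B \<Longrightarrow> t (d2 \<alpha>) = s (d2 \<beta>) \<Longrightarrow> t (d2 \<beta>) = s (d2 \<gamma>) \<Longrightarrow>
   V (asc B (c2 \<gamma>) (c2 \<beta>) (c2 \<alpha>)) (H (H \<gamma> \<beta>) \<alpha>) = V (H \<gamma> (H \<beta> \<alpha>)) (asc B (d2 \<gamma>) (d2 \<beta>) (d2 \<alpha>))"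
  using asc_nat_h[of \<alpha> "d2 \<alpha>" "c2 \<alpha>" \<beta> "d2 \<beta>" "c2 \<beta>" \<gamma> "d2 \<gamma>" "c2 \<gamma>"] hom2_iff by auto
lemma lun_nat: "\<alpha> \<in> Cell B \<Longrightarrow> V \<alpha> (lun B (d2 \<alpha>)) = V (lun B (c2 \<alpha>)) (H (I (idn B (t (d2 \<alpha>)))) \<alpha>)"
  using lun_nat_h[of \<alpha> "d2 \<alpha>" "c2 \<alpha>"] hom2_iff by auto
lemma run_nat: "\<alpha> \<in> Cell B \<Longrightarrow> V \<alpha> (run B (d2 \<alpha>)) = V (run B (c2 \<alpha>)) (H \<alpha> (I (idn B (s (d2 \<alpha>)))))"
  using run_nat_h[of \<alpha> "d2 \<alpha>" "c2 \<alpha>"] hom2_iff by auto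
lemma eps_nat: "\<alpha> \<in> Cell B \<Longrightarrow> V (eps B (c2 \<alpha>)) (H (rinv2 B \<alpha>) \<alpha>) = eps B (d2 \<alpha>)"
  using eps_nat_h[of \<alpha> "d2 \<alpha>" "c2 \<alpha>"] hom2_iff by auto
lemma eta_nat: "\<alpha> \<in> Cell B \<Longrightarrow> V (H \<alpha> (rinv2 B \<alpha>)) (eta B (d2 \<alpha>)) = eta B (c2 \<alpha>)"
  using eta_nat_h[of \<alpha> "d2 \<alpha>" "c2 \<alpha>"] hom2_iff by auto

definition inv2 :: "'b \<Rightarrow> 'b" where
  "inv2 \<alpha> = (SOME \<beta>. \<beta> \<in> hom2 B (c2 \<alpha>) (d2 \<alpha>) \<and> V \<beta> \<alpha> = I (d2 \<alpha>) \<and> V \<alpha> \<beta> = I (c2 \<alpha>))"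

lemma inv2_prop: assumes "\<alpha> \<in> Cell B"
  shows "inv2 \<alpha> \<in> hom2 B (c2 \<alpha>) (d2 \<alpha>) \<and> V (inv2 \<alpha>) \<alpha> = I (d2 \<alpha>) \<and> V \<alpha> (inv2 \<alpha>) = I (c2 \<alpha>)"
proof -
  have "\<exists>\<beta>. \<beta> \<in> hom2 B (c2 \<alpha>) (d2 \<alpha>) \<and> V \<beta> \<alpha> = I (d2 \<alpha>) \<and> V \<alpha> \<beta> = I (c2 \<alpha>)"
    using vinv_h[of \<alpha> "d2 \<alpha>" "c2 \<alpha>"] assms hom2_iff by auto
  then show ?thesis unfolding inv2_def by (rule someI_ex)
qed
lemma inv2_C[simp]: "\<alpha> \<in> Cell B \<Longrightarrow> inv2 \<alpha> \<in> Cell B" using inv2_prop hom2_iff by blast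
lemma inv2_d[simp]: "\<alpha> \<in> Cell B \<Longrightarrow> d2 (inv2 \<alpha>) = c2 \<alpha>" using inv2_prop hom2_iff by blast
lemma inv2_c[simp]: "\<alpha> \<in> Cell B \<Longrightarrow> c2 (inv2 \<alpha>) = d2 \<alpha>" using inv2_prop hom2_iff by blast
lemma inv2_L[simp]: "\<alpha> \<in> Cell B \<Longrightarrow> V (inv2 \<alpha>) \<alpha> = I (d2 \<alpha>)" using inv2_prop by blast
lemma inv2_R[simp]: "\<alpha> \<in> Cell B \<Longrightarrow> V \<alpha> (inv2 \<alpha>) = I (c2 \<alpha>)" using inv2_prop by blast
lemma inv2_L'[simp]: "\<alpha> \<in> Cell B \<Longrightarrow> \<gamma> \<in> Cell B \<Longrightarrow> c2 \<gamma> = d2 \<alpha> \<Longrightarrow> V (inv2 \<alpha>) (V \<alpha> \<gamma>) = \<gamma>"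
  by (simp flip: vassoc)
lemma inv2_R'[simp]: "\<alpha> \<in> Cell B \<Longrightarrow> \<gamma> \<in> Cell B \<Longrightarrow> c2 \<gamma> = c2 \<alpha> \<Longrightarrow> V \<alpha> (V (inv2 \<alpha>) \<gamma>) = \<gamma>"
  by (simp flip: vassoc)

lemma inv_unique: "\<alpha> \<in> Cell B \<Longrightarrow> \<beta> \<in> Cell B \<Longrightarrow> d2 \<beta> = c2 \<alpha> \<Longrightarrow> V \<beta> \<alpha> = I (d2 \<alpha>) \<Longrightarrow> inv2 \<alpha> = \<beta>"
proof -
  assume a: "\<alpha> \<in> Cell B" "\<beta> \<in> Cell B" "d2 \<beta> = c2 \<alpha>" "V \<beta> \<alpha> = I (d2 \<alpha>)"
  have "inv2 \<alpha> = V (V \<beta> \<alpha>) (inv2 \<alpha>)" using a by simp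
  also have "\<dots> = V \<beta> (V \<alpha> (inv2 \<alpha>))" using a by (intro vassoc) auto
  also have "\<dots> = \<beta>" using a by simp
  finally show ?thesis .
qed

lemma cancel_L: "\<alpha> \<in> Cell B \<Longrightarrow> \<beta> \<in> Cell B \<Longrightarrow> \<gamma> \<in> Cell B \<Longrightarrow> c2 \<beta> = d2 \<alpha> \<Longrightarrow> c2 \<gamma> = d2 \<alpha> \<Longrightarrow>
   V \<alpha> \<beta> = V \<alpha> \<gamma> \<Longrightarrow> \<beta> = \<gamma>"
  by (metis inv2_L')
lemma cancel_R: "\<alpha> \<in> Cell B \<Longrightarrow> \<beta> \<in> Cell B \<Longrightarrow> \<gamma> \<in> Cell B \<Longrightarrow> d2 \<beta> = c2 \<alpha> \<Longrightarrow> d2 \<gamma> = c2 \<alpha> \<Longrightarrow>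
   V \<beta> \<alpha> = V \<gamma> \<alpha> \<Longrightarrow> \<beta> = \<gamma>"
proof -
  assume a: "\<alpha> \<in> Cell B" "\<beta> \<in> Cell B" "\<gamma> \<in> Cell B" "d2 \<beta> = c2 \<alpha>" "d2 \<gamma> = c2 \<alpha>" "V \<beta> \<alpha> = V \<gamma> \<alpha>"
  have "\<beta> = V (V \<beta> \<alpha>) (inv2 \<alpha>)" using a by (subst vassoc) auto
  also have "\<dots> = V (V \<gamma> \<alpha>) (inv2 \<alpha>)" using a by simp
  also have "\<dots> = \<gamma>" using a by (simp add: vassoc)
  finally show ?thesis .
qed

end

context bg begin


lemma inv2_inv2[simp]: "\<alpha> \<in> Cell B \<Longrightarrow> inv2 (inv2 \<alpha>) = \<alpha>"
  by (rule inv_unique) auto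
lemma inv2_I[simp]: "f \<in> Arr B \<Longrightarrow> inv2 (I f) = I f"
  by (rule inv_unique) auto
lemma inv2_V: "\<alpha> \<in> Cell B \<Longrightarrow> \<beta> \<in> Cell B \<Longrightarrow> d2 \<beta> = c2 \<alpha> \<Longrightarrow> inv2 (V \<beta> \<alpha>) = V (inv2 \<alpha>) (inv2 \<beta>)"
  by (rule inv_unique) (auto simp: vassoc)
lemma H_I_V: "\<alpha> \<in> Cell B \<Longrightarrow> \<beta> \<in> Cell B \<Longrightarrow> d2 \<beta> = c2 \<alpha> \<Longrightarrow> g \<in> Arr B \<Longrightarrow> s g = t (d2 \<alpha>) \<Longrightarrow>
   H (I g) (V \<beta> \<alpha>) = V (H (I g) \<beta>) (H (I g) \<alpha>)"
  using interchange[of \<alpha> \<beta> "I g" "I g"] by simp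
lemma H_V_I: "\<alpha> \<in> Cell B \<Longrightarrow> \<beta> \<in> Cell B \<Longrightarrow> d2 \<beta> = c2 \<alpha> \<Longrightarrow> f \<in> Arr B \<Longrightarrow> t f = s (d2 \<alpha>) \<Longrightarrow>
   H (V \<beta> \<alpha>) (I f) = V (H \<beta> (I f)) (H \<alpha> (I f))"
  using interchange[of "I f" "I f" \<alpha> \<beta>] by simp
lemma inv2_H: "\<alpha> \<in> Cell B \<Longrightarrow> \<beta> \<in> Cell B \<Longrightarrow> t (d2 \<alpha>) = s (d2 \<beta>) \<Longrightarrow> inv2 (H \<beta> \<alpha>) = H (inv2 \<beta>) (inv2 \<alpha>)"
  by (rule inv_unique) (auto simp flip: interchange)

lemma faithL: assumes a: "\<alpha> \<in> Cell B" "\<beta> \<in> Cell B" "d2 \<alpha> = d2 \<beta>" "c2 \<alpha> = c2 \<beta>"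
  and u: "u = idn B (t (d2 \<alpha>))" and h0: "H (I u) \<alpha> = H (I u) \<beta>" shows "\<alpha> = \<beta>"
proof -
  have h: "H (I (idn B (t (d2 \<alpha>)))) \<alpha> = H (I (idn B (t (d2 \<alpha>)))) \<beta>" using u h0 by (simp only:)
  have "V \<alpha> (lun B (d2 \<alpha>)) = V (lun B (c2 \<alpha>)) (H (I (idn B (t (d2 \<alpha>)))) \<alpha>)"
    using lun_nat[of \<alpha>] a(1) by blast
  also have "\<dots> = V (lun B (c2 \<beta>)) (H (I (idn B (t (d2 \<beta>)))) \<beta>)"
    using a(3,4) h by (simp only:)
  also have "\<dots> = V \<beta> (lun B (d2 \<beta>))" using lun_nat[of \<beta>] a(2) by (simp only:)
  finally have "V \<alpha> (lun B (d2 \<alpha>)) = V \<beta> (lun B (d2 \<alpha>))" using a(3) by (simp only:)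
  then show ?thesis apply (rule cancel_R[rotated 5]) using a by auto
qed
lemma faithR: assumes a: "\<alpha> \<in> Cell B" "\<beta> \<in> Cell B" "d2 \<alpha> = d2 \<beta>" "c2 \<alpha> = c2 \<beta>"
  and u: "u = idn B (s (d2 \<alpha>))" and h0: "H \<alpha> (I u) = H \<beta> (I u)" shows "\<alpha> = \<beta>"
proof -
  have h: "H \<alpha> (I (idn B (s (d2 \<alpha>)))) = H \<beta> (I (idn B (s (d2 \<alpha>))))" using u h0 by (simp only:)
  have "V \<alpha> (run B (d2 \<alpha>)) = V (run B (c2 \<alpha>)) (H \<alpha> (I (idn B (s (d2 \<alpha>)))))"
    using run_nat[of \<alpha>] a(1) by blast
  also have "\<dots> = V (run B (c2 \<beta>)) (H \<beta> (I (idn B (s (d2 \<beta>)))))"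
    using a(3,4) h by (simp only:)
  also have "\<dots> = V \<beta> (run B (d2 \<beta>))" using run_nat[of \<beta>] a(2) by (simp only:)
  finally have "V \<alpha> (run B (d2 \<alpha>)) = V \<beta> (run B (d2 \<alpha>))" using a(3) by (simp only:)
  then show ?thesis apply (rule cancel_R[rotated 5]) using a by auto
qed

lemma kelly1: assumes f: "f \<in> Arr B" and g: "g \<in> Arr B" and fg: "t f = s g"
  shows "V (lun B (hc g f)) (asc B (idn B (t g)) g f) = H (lun B g) (I f)"
proof -
  define P where "P = V (asc B (idn B (t g)) (hc (idn B (t g)) g) f) (H (asc B (idn B (t g)) (idn B (t g)) g) (I f))"
  have P: "P \<in> Cell B" "d2 P = hc (hc (hc (idn B (t g)) (idn B (t g))) g) f" "c2 P = hc (idn B (t g)) (hc (hc (idn B (t g)) g) f)"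
    using f g fg by (auto simp: P_def)
  have "V (H (I (idn B (t g))) (V (lun B (hc g f)) (asc B (idn B (t g)) g f))) P
      = V (V (H (I (idn B (t g))) (lun B (hc g f))) (H (I (idn B (t g))) (asc B (idn B (t g)) g f))) P"
    using f g fg by (subst H_I_V) auto
  also have "\<dots> = V (H (I (idn B (t g))) (lun B (hc g f))) (V (H (I (idn B (t g))) (asc B (idn B (t g)) g f)) P)"
    using f g fg P by (simp add: vassoc P_def)
  also have "\<dots> = V (H (I (idn B (t g))) (lun B (hc g f))) (V (asc B (idn B (t g)) (idn B (t g)) (hc g f)) (asc B (hc (idn B (t g)) (idn B (t g))) g f))"
    using f g fg pentagon[of f g "idn B (t g)" "idn B (t g)"] by (simp add: P_def)
  also have "\<dots> = V (V (H (I (idn B (t g))) (lun B (hc g f))) (asc B (idn B (t g)) (idn B (t g)) (hc g f))) (asc B (hc (idn B (t g)) (idn B (t g))) g f)"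
    using f g fg by (simp add: vassoc)
  also have "\<dots> = V (H (run B (idn B (t g))) (I (hc g f))) (asc B (hc (idn B (t g)) (idn B (t g))) g f)"
    using f g fg triangle[of "hc g f" "idn B (t g)"] by simp
  also have "\<dots> = V (asc B (idn B (t g)) g f) (H (H (run B (idn B (t g))) (I g)) (I f))"
    using f g fg asc_nat[of "I f" "I g" "run B (idn B (t g))"] by simp
  also have "\<dots> = V (asc B (idn B (t g)) g f) (H (V (H (I (idn B (t g))) (lun B g)) (asc B (idn B (t g)) (idn B (t g)) g)) (I f))"
    using f g fg triangle[of g "idn B (t g)"] by simp
  also have "\<dots> = V (asc B (idn B (t g)) g f) (V (H (H (I (idn B (t g))) (lun B g)) (I f)) (H (asc B (idn B (t g)) (idn B (t g)) g) (I f)))"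
    using f g fg by (subst H_V_I) auto
  also have "\<dots> = V (V (asc B (idn B (t g)) g f) (H (H (I (idn B (t g))) (lun B g)) (I f))) (H (asc B (idn B (t g)) (idn B (t g)) g) (I f))"
    using f g fg by (simp add: vassoc)
  also have "\<dots> = V (V (H (I (idn B (t g))) (H (lun B g) (I f))) (asc B (idn B (t g)) (hc (idn B (t g)) g) f)) (H (asc B (idn B (t g)) (idn B (t g)) g) (I f))"
    using f g fg asc_nat[of "I f" "lun B g" "I (idn B (t g))"] by simp
  also have "\<dots> = V (H (I (idn B (t g))) (H (lun B g) (I f))) P"
    using f g fg by (simp add: vassoc P_def)
  finally have eq: "V (H (I (idn B (t g))) (V (lun B (hc g f)) (asc B (idn B (t g)) g f))) P = V (H (I (idn B (t g))) (H (lun B g) (I f))) P" .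
  have eq2: "H (I (idn B (t g))) (V (lun B (hc g f)) (asc B (idn B (t g)) g f)) = H (I (idn B (t g))) (H (lun B g) (I f))"
    by (rule cancel_R[OF P(1) _ _ _ _ eq]) (insert f g fg, simp_all add: P)
  show ?thesis by (rule faithL[OF _ _ _ _ _ eq2]) (insert f g fg, simp_all)
qed
lemma kelly2: assumes f: "f \<in> Arr B" and g: "g \<in> Arr B" and fg: "t f = s g"
  shows "run B (hc g f) = V (H (I g) (run B f)) (asc B g f (idn B (s f)))"
proof -
  have "V (asc B g f (idn B (s f))) (H (run B (hc g f)) (I (idn B (s f))))
     = V (asc B g f (idn B (s f))) (V (H (I (hc g f)) (lun B (idn B (s f)))) (asc B (hc g f) (idn B (s f)) (idn B (s f))))"
    using f g fg triangle[of "idn B (s f)" "hc g f"] by simp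
  also have "\<dots> = V (V (asc B g f (idn B (s f))) (H (I (hc g f)) (lun B (idn B (s f))))) (asc B (hc g f) (idn B (s f)) (idn B (s f)))"
    using f g fg by (simp add: vassoc)
  also have "\<dots> = V (V (H (I g) (H (I f) (lun B (idn B (s f))))) (asc B g f (hc (idn B (s f)) (idn B (s f))))) (asc B (hc g f) (idn B (s f)) (idn B (s f)))"
    using f g fg asc_nat[of "lun B (idn B (s f))" "I f" "I g"] by simp
  also have "\<dots> = V (H (I g) (H (I f) (lun B (idn B (s f))))) (V (asc B g f (hc (idn B (s f)) (idn B (s f)))) (asc B (hc g f) (idn B (s f)) (idn B (s f))))"
    using f g fg by (simp add: vassoc)
  also have "\<dots> = V (H (I g) (H (I f) (lun B (idn B (s f))))) (V (H (I g) (asc B f (idn B (s f)) (idn B (s f)))) (V (asc B g (hc f (idn B (s f))) (idn B (s f))) (H (asc B g f (idn B (s f))) (I (idn B (s f))))))"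
    using f g fg pentagon[of "idn B (s f)" "idn B (s f)" f g] by simp
  also have "\<dots> = V (V (H (I g) (H (I f) (lun B (idn B (s f))))) (H (I g) (asc B f (idn B (s f)) (idn B (s f))))) (V (asc B g (hc f (idn B (s f))) (idn B (s f))) (H (asc B g f (idn B (s f))) (I (idn B (s f)))))"
    using f g fg by (simp add: vassoc)
  also have "\<dots> = V (H (I g) (V (H (I f) (lun B (idn B (s f)))) (asc B f (idn B (s f)) (idn B (s f))))) (V (asc B g (hc f (idn B (s f))) (idn B (s f))) (H (asc B g f (idn B (s f))) (I (idn B (s f)))))"
    using f g fg by (subst H_I_V) auto
  also have "\<dots> = V (H (I g) (H (run B f) (I (idn B (s f))))) (V (asc B g (hc f (idn B (s f))) (idn B (s f))) (H (asc B g f (idn B (s f))) (I (idn B (s f)))))"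
    using f g fg triangle[of "idn B (s f)" f] by simp
  also have "\<dots> = V (V (H (I g) (H (run B f) (I (idn B (s f))))) (asc B g (hc f (idn B (s f))) (idn B (s f)))) (H (asc B g f (idn B (s f))) (I (idn B (s f))))"
    using f g fg by (simp add: vassoc)
  also have "\<dots> = V (V (asc B g f (idn B (s f))) (H (H (I g) (run B f)) (I (idn B (s f))))) (H (asc B g f (idn B (s f))) (I (idn B (s f))))"
    using f g fg asc_nat[of "I (idn B (s f))" "run B f" "I g"] by simp
  also have "\<dots> = V (asc B g f (idn B (s f))) (V (H (H (I g) (run B f)) (I (idn B (s f)))) (H (asc B g f (idn B (s f))) (I (idn B (s f)))))"
    using f g fg by (simp add: vassoc)
  also have "\<dots> = V (asc B g f (idn B (s f))) (H (V (H (I g) (run B f)) (asc B g f (idn B (s f)))) (I (idn B (s f))))"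
    using f g fg by (subst H_V_I) auto
  finally have eq: "V (asc B g f (idn B (s f))) (H (run B (hc g f)) (I (idn B (s f))))
     = V (asc B g f (idn B (s f))) (H (V (H (I g) (run B f)) (asc B g f (idn B (s f)))) (I (idn B (s f))))" .
  have eq2: "H (run B (hc g f)) (I (idn B (s f))) = H (V (H (I g) (run B f)) (asc B g f (idn B (s f)))) (I (idn B (s f)))"
    by (rule cancel_L[OF _ _ _ _ _ eq]) (insert f g fg, simp_all)
  show ?thesis by (rule faithR[OF _ _ _ _ _ eq2]) (insert f g fg, simp_all)
qed

lemma lun_run_idn: assumes X: "X \<in> Obj B" shows "lun B (idn B X) = run B (idn B X)"
proof -
  have k: "V (lun B (hc (idn B X) (idn B X))) (asc B (idn B X) (idn B X) (idn B X)) = H (lun B (idn B X)) (I (idn B X))"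
    using kelly1[of "idn B X" "idn B X"] X by simp
  have tr: "V (H (I (idn B X)) (lun B (idn B X))) (asc B (idn B X) (idn B X) (idn B X)) = H (run B (idn B X)) (I (idn B X))"
    using triangle[of "idn B X" "idn B X"] X by simp
  have n: "V (lun B (idn B X)) (lun B (hc (idn B X) (idn B X))) = V (lun B (idn B X)) (H (I (idn B X)) (lun B (idn B X)))"
    using lun_nat[of "lun B (idn B X)"] X by simp
  have l2: "lun B (hc (idn B X) (idn B X)) = H (I (idn B X)) (lun B (idn B X))"
    by (rule cancel_L[OF _ _ _ _ _ n]) (insert X, simp_all)
  have "H (lun B (idn B X)) (I (idn B X)) = H (run B (idn B X)) (I (idn B X))"
    using k tr l2 by simp
  then show ?thesis by (rule faithR[rotated 5]) (insert X, simp_all)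
qed

end

context bg begin

definition lt :: "'a \<times> bool \<Rightarrow> 'a" where "lt x = (if snd x then fst x else rinv B (fst x))"
definition ls :: "'a \<times> bool \<Rightarrow> 'o" where "ls x = (if snd x then s (fst x) else t (fst x))"
definition lg :: "'a \<times> bool \<Rightarrow> 'o" where "lg x = (if snd x then t (fst x) else s (fst x))"

fun wfw :: "'o \<Rightarrow> ('a \<times> bool) list \<Rightarrow> bool" where
  "wfw X [] = (X \<in> Obj B)"
| "wfw X (x # w) = (fst x \<in> Arr B \<and> ls x = X \<and> wfw (lg x) w)"

fun endp :: "'o \<Rightarrow> ('a \<times> bool) list \<Rightarrow> 'o" where
  "endp X [] = X"
| "endp X (x # w) = endp (lg x) w"

fun ev :: "'o \<Rightarrow> ('a \<times> bool) list \<Rightarrow> 'a" where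
  "ev X [] = idn B X"
| "ev X (x # w) = (if w = [] then lt x else hc (ev (lg x) w) (lt x))"

lemma lt_A[simp]: "fst x \<in> Arr B \<Longrightarrow> lt x \<in> Arr B" by (simp add: lt_def)
lemma lt_s[simp]: "fst x \<in> Arr B \<Longrightarrow> s (lt x) = ls x" by (simp add: lt_def ls_def)
lemma lt_t[simp]: "fst x \<in> Arr B \<Longrightarrow> t (lt x) = lg x" by (simp add: lt_def lg_def)
lemma ls_O[simp]: "fst x \<in> Arr B \<Longrightarrow> ls x \<in> Obj B" by (simp add: ls_def)
lemma lg_O[simp]: "fst x \<in> Arr B \<Longrightarrow> lg x \<in> Obj B" by (simp add: lg_def)

lemma wfw_O[simp]: "wfw X w \<Longrightarrow> X \<in> Obj B"
  by (cases w) auto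
lemma endp_O[simp]: "wfw X w \<Longrightarrow> endp X w \<in> Obj B"
  by (induction X w rule: endp.induct) auto
lemma wfw_append[simp]: "wfw X (w1 @ w2) \<longleftrightarrow> wfw X w1 \<and> wfw (endp X w1) w2"
  by (induction X w1 rule: endp.induct) auto
lemma endp_append[simp]: "endp X (w1 @ w2) = endp (endp X w1) w2"
  by (induction X w1 rule: endp.induct) auto

lemma ev_props: "wfw X w \<Longrightarrow> ev X w \<in> Arr B \<and> s (ev X w) = X \<and> t (ev X w) = endp X w"
proof (induction X w rule: ev.induct)
  case (1 X) then show ?case by simp
next
  case (2 X x w) then show ?case by (cases w) auto
qed
lemma ev_A[simp]: "wfw X w \<Longrightarrow> ev X w \<in> Arr B" using ev_props by blast
lemma ev_s[simp]: "wfw X w \<Longrightarrow> s (ev X w) = X" using ev_props by blast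
lemma ev_t[simp]: "wfw X w \<Longrightarrow> t (ev X w) = endp X w" using ev_props by blast

lemma ev_indep: "w \<noteq> [] \<Longrightarrow> ev X w = ev Y w"
  by (cases w) auto

lemma ev_Cons_Cons: "ev X (x # y # v) = hc (ev (lg x) (y # v)) (lt x)" by simp

fun kap :: "'o \<Rightarrow> ('a \<times> bool) list \<Rightarrow> ('a \<times> bool) list \<Rightarrow> 'b" where
  "kap X [] w2 = inv2 (run B (ev X w2))"
| "kap X [x] w2 = (if w2 = [] then inv2 (lun B (lt x)) else I (hc (ev (lg x) w2) (lt x)))"
| "kap X (x # y # v) w2 = (if w2 = [] then inv2 (lun B (ev X (x # y # v)))
     else V (asc B (ev (endp (lg x) (y # v)) w2) (ev (lg x) (y # v)) (lt x)) (H (kap (lg x) (y # v) w2) (I (lt x))))"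

lemma kap_props: "wfw X w1 \<Longrightarrow> wfw (endp X w1) w2 \<Longrightarrow>
   kap X w1 w2 \<in> Cell B \<and> d2 (kap X w1 w2) = ev X (w1 @ w2) \<and> c2 (kap X w1 w2) = hc (ev (endp X w1) w2) (ev X w1)"
proof (induction X w1 w2 rule: kap.induct)
  case (1 X w2) then show ?case by simp
next
  case (2 X x w2) then show ?case by (cases w2) auto
next
  case (3 X x y v w2)
  show ?case
  proof (cases "w2 = []")
    case True then show ?thesis using 3 by (simp del: ev.simps add: ev_Cons_Cons ev.simps(1))
  next
    case False
    then show ?thesis using 3 by (simp del: ev.simps add: ev_Cons_Cons ev.simps(1))
  qed
qed

lemma kap_C[simp]: "wfw X w1 \<Longrightarrow> wfw (endp X w1) w2 \<Longrightarrow> kap X w1 w2 \<in> Cell B" using kap_props by blast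
lemma kap_d[simp]: "wfw X w1 \<Longrightarrow> wfw (endp X w1) w2 \<Longrightarrow> d2 (kap X w1 w2) = ev X (w1 @ w2)" using kap_props by blast
lemma kap_c[simp]: "wfw X w1 \<Longrightarrow> wfw (endp X w1) w2 \<Longrightarrow> c2 (kap X w1 w2) = hc (ev (endp X w1) w2) (ev X w1)" using kap_props by blast

lemma kap_nil2: "w1 \<noteq> [] \<Longrightarrow> kap X w1 [] = inv2 (lun B (ev X w1))"
  by (cases "(X,w1,[]::('a\<times>bool) list)" rule: kap.cases) auto

end

context bg begin

lemma swap: assumes eq: "V \<alpha> \<beta> = V \<gamma> \<delta>" and C: "\<alpha> \<in> Cell B" "\<beta> \<in> Cell B" "\<gamma> \<in> Cell B" "\<delta> \<in> Cell B"
  and ty: "d2 \<alpha> = c2 \<beta>" "d2 \<gamma> = c2 \<delta>" "d2 \<beta> = d2 \<delta>" "c2 \<alpha> = c2 \<gamma>"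
  shows "V \<delta> (inv2 \<beta>) = V (inv2 \<gamma>) \<alpha>"
proof -
  have "V \<delta> (inv2 \<beta>) = V (inv2 \<gamma>) (V \<gamma> (V \<delta> (inv2 \<beta>)))" using C ty by simp
  also have "\<dots> = V (inv2 \<gamma>) (V (V \<gamma> \<delta>) (inv2 \<beta>))" using C ty by (simp add: vassoc)
  also have "\<dots> = V (inv2 \<gamma>) (V (V \<alpha> \<beta>) (inv2 \<beta>))" using eq by simp
  also have "\<dots> = V (inv2 \<gamma>) \<alpha>" using C ty by (simp add: vassoc)
  finally show ?thesis .
qed

lemma inv_eq: assumes eq: "V \<alpha> \<beta> = \<gamma>" and C: "\<alpha> \<in> Cell B" "\<beta> \<in> Cell B" and ty: "d2 \<alpha> = c2 \<beta>"
  shows "V (inv2 \<beta>) (inv2 \<alpha>) = inv2 \<gamma>"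
  unfolding eq[symmetric] using C ty by (simp add: inv2_V)

lemma coh_nil1: assumes w2: "wfw X w2" and w3: "wfw (endp X w2) w3"
  shows "V (asc B (ev (endp X w2) w3) (ev X w2) (idn B X)) (V (H (kap X w2 w3) (I (idn B X))) (inv2 (run B (ev X (w2 @ w3)))))
       = V (H (I (ev (endp X w2) w3)) (inv2 (run B (ev X w2)))) (kap X w2 w3)"
proof -
  let ?E2 = "ev X w2" and ?E3 = "ev (endp X w2) w3"
  have n: "V (kap X w2 w3) (run B (ev X (w2 @ w3))) = V (run B (hc ?E3 ?E2)) (H (kap X w2 w3) (I (idn B X)))"
    using run_nat[of "kap X w2 w3"] w2 w3 by simp
  have e1: "V (H (kap X w2 w3) (I (idn B X))) (inv2 (run B (ev X (w2 @ w3)))) = V (inv2 (run B (hc ?E3 ?E2))) (kap X w2 w3)"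
    by (rule swap[OF n]) (insert w2 w3, simp_all)
  have k2: "run B (hc ?E3 ?E2) = V (H (I ?E3) (run B ?E2)) (asc B ?E3 ?E2 (idn B X))"
    using kelly2[of ?E2 ?E3] w2 w3 by simp
  have "V (asc B ?E3 ?E2 (idn B X)) (V (H (kap X w2 w3) (I (idn B X))) (inv2 (run B (ev X (w2 @ w3)))))
      = V (asc B ?E3 ?E2 (idn B X)) (V (inv2 (V (H (I ?E3) (run B ?E2)) (asc B ?E3 ?E2 (idn B X)))) (kap X w2 w3))"
    using e1 k2 by simp
  also have "\<dots> = V (asc B ?E3 ?E2 (idn B X)) (V (V (inv2 (asc B ?E3 ?E2 (idn B X))) (inv2 (H (I ?E3) (run B ?E2)))) (kap X w2 w3))"
    using w2 w3 by (subst inv2_V) auto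
  also have "\<dots> = V (inv2 (H (I ?E3) (run B ?E2))) (kap X w2 w3)"
    using w2 w3 by (simp add: vassoc)
  also have "\<dots> = V (H (I ?E3) (inv2 (run B ?E2))) (kap X w2 w3)"
    using w2 w3 by (simp add: inv2_H)
  finally show ?thesis .
qed

lemma coh_nil2: assumes w1: "wfw X w1" and ne: "w1 \<noteq> []" and w3: "wfw (endp X w1) w3"
  shows "V (asc B (ev (endp X w1) w3) (idn B (endp X w1)) (ev X w1)) (V (H (inv2 (run B (ev (endp X w1) w3))) (I (ev X w1))) (kap X w1 w3))
       = V (H (I (ev (endp X w1) w3)) (inv2 (lun B (ev X w1)))) (kap X w1 w3)"
proof -
  let ?E1 = "ev X w1" and ?E3 = "ev (endp X w1) w3" and ?Y = "endp X w1"
  have tr: "V (H (I ?E3) (lun B ?E1)) (asc B ?E3 (idn B ?Y) ?E1) = H (run B ?E3) (I ?E1)"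
    using triangle[of ?E1 ?E3] w1 w3 by simp
  have "V (inv2 (asc B ?E3 (idn B ?Y) ?E1)) (inv2 (H (I ?E3) (lun B ?E1))) = inv2 (H (run B ?E3) (I ?E1))"
    by (rule inv_eq[OF tr]) (insert w1 w3, simp_all)
  then have tr2: "V (inv2 (asc B ?E3 (idn B ?Y) ?E1)) (H (I ?E3) (inv2 (lun B ?E1))) = H (inv2 (run B ?E3)) (I ?E1)"
    using w1 w3 by (simp add: inv2_H)
  have "V (asc B ?E3 (idn B ?Y) ?E1) (V (H (inv2 (run B ?E3)) (I ?E1)) (kap X w1 w3))
      = V (asc B ?E3 (idn B ?Y) ?E1) (V (V (inv2 (asc B ?E3 (idn B ?Y) ?E1)) (H (I ?E3) (inv2 (lun B ?E1)))) (kap X w1 w3))"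
    using tr2 by simp
  also have "\<dots> = V (H (I ?E3) (inv2 (lun B ?E1))) (kap X w1 w3)"
    using w1 w3 by (simp add: vassoc)
  finally show ?thesis .
qed

lemma coh_nil3: assumes w1: "wfw X w1" and w2: "wfw (endp X w1) w2" and ne1: "w1 \<noteq> []" and ne2: "w2 \<noteq> []"
  shows "V (asc B (idn B (endp (endp X w1) w2)) (ev (endp X w1) w2) (ev X w1)) (V (H (inv2 (lun B (ev (endp X w1) w2))) (I (ev X w1))) (kap X w1 w2))
       = V (H (I (idn B (endp (endp X w1) w2))) (kap X w1 w2)) (inv2 (lun B (ev X (w1 @ w2))))"
proof -
  let ?E1 = "ev X w1" and ?E2 = "ev (endp X w1) w2" and ?Z = "endp (endp X w1) w2"
  have k1: "V (lun B (hc ?E2 ?E1)) (asc B (idn B ?Z) ?E2 ?E1) = H (lun B ?E2) (I ?E1)"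
    using kelly1[of ?E1 ?E2] w1 w2 by simp
  have "V (inv2 (asc B (idn B ?Z) ?E2 ?E1)) (inv2 (lun B (hc ?E2 ?E1))) = inv2 (H (lun B ?E2) (I ?E1))"
    by (rule inv_eq[OF k1]) (insert w1 w2, simp_all)
  then have k1': "V (inv2 (asc B (idn B ?Z) ?E2 ?E1)) (inv2 (lun B (hc ?E2 ?E1))) = H (inv2 (lun B ?E2)) (I ?E1)"
    using w1 w2 by (simp add: inv2_H)
  have n: "V (kap X w1 w2) (lun B (ev X (w1 @ w2))) = V (lun B (hc ?E2 ?E1)) (H (I (idn B ?Z)) (kap X w1 w2))"
    using lun_nat[of "kap X w1 w2"] w1 w2 by simp
  have e1: "V (H (I (idn B ?Z)) (kap X w1 w2)) (inv2 (lun B (ev X (w1 @ w2)))) = V (inv2 (lun B (hc ?E2 ?E1))) (kap X w1 w2)"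
    by (rule swap[OF n]) (insert w1 w2, simp_all)
  have "V (asc B (idn B ?Z) ?E2 ?E1) (V (H (inv2 (lun B ?E2)) (I ?E1)) (kap X w1 w2))
     = V (asc B (idn B ?Z) ?E2 ?E1) (V (V (inv2 (asc B (idn B ?Z) ?E2 ?E1)) (inv2 (lun B (hc ?E2 ?E1)))) (kap X w1 w2))"
    using k1' by simp
  also have "\<dots> = V (inv2 (lun B (hc ?E2 ?E1))) (kap X w1 w2)"
    using w1 w2 by (simp add: vassoc)
  also have "\<dots> = V (H (I (idn B ?Z)) (kap X w1 w2)) (inv2 (lun B (ev X (w1 @ w2))))"
    using e1 by simp
  finally show ?thesis .
qed

lemma ev_cons: "v \<noteq> [] \<Longrightarrow> ev X (x # v) = hc (ev (lg x) v) (lt x)" by simp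
lemma ev_single: "ev X [x] = lt x" by simp
lemma kap_single: "w2 \<noteq> [] \<Longrightarrow> kap X [x] w2 = I (hc (ev (lg x) w2) (lt x))" by simp
lemma kap_cons: "v \<noteq> [] \<Longrightarrow> w2 \<noteq> [] \<Longrightarrow>
   kap X (x # v) w2 = V (asc B (ev (endp (lg x) v) w2) (ev (lg x) v) (lt x)) (H (kap (lg x) v w2) (I (lt x)))"
  by (cases v) auto

lemma coh_main: "w1 \<noteq> [] \<Longrightarrow> w2 \<noteq> [] \<Longrightarrow> w3 \<noteq> [] \<Longrightarrow> wfw X w1 \<Longrightarrow> wfw (endp X w1) w2 \<Longrightarrow> wfw (endp (endp X w1) w2) w3 \<Longrightarrow>
  V (asc B (ev (endp (endp X w1) w2) w3) (ev (endp X w1) w2) (ev X w1)) (V (H (kap (endp X w1) w2 w3) (I (ev X w1))) (kap X w1 (w2 @ w3)))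
  = V (H (I (ev (endp (endp X w1) w2) w3)) (kap X w1 w2)) (kap X (w1 @ w2) w3)"
proof (induction w1 arbitrary: X)
  case Nil then show ?case by simp
next
  case (Cons x v)
  note ne2 = \<open>w2 \<noteq> []\<close> and ne3 = \<open>w3 \<noteq> []\<close>
  have wx: "fst x \<in> Arr B" "ls x = X" "wfw (lg x) v" using Cons.prems by auto
  have w2: "wfw (endp (lg x) v) w2" and w3: "wfw (endp (endp (lg x) v) w2) w3" using Cons.prems by auto
  show ?case
  proof (cases "v = []")
    case True
    then show ?thesis using wx w2 w3 ne2 ne3
      by (simp del: kap.simps ev.simps add: kap_single kap_cons ev.simps(1) ev_cons ev_single)
  next
    case False
    let ?x = "lt x" and ?L = "lg x"
    let ?Y = "endp (lg x) v"
    let ?Z = "endp (endp (lg x) v) w2"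
    let ?Ev = "ev (lg x) v" and ?E2 = "ev (endp (lg x) v) w2" and ?E3 = "ev (endp (endp (lg x) v) w2) w3"
    let ?E23 = "ev (endp (lg x) v) (w2 @ w3)"
    let ?k23 = "kap ?Y w2 w3" and ?kv23 = "kap ?L v (w2 @ w3)" and ?kv2 = "kap ?L v w2" and ?kv2_3 = "kap ?L (v @ w2) w3"
    let ?A = "asc B ?E3 ?E2 (hc ?Ev ?x)" and ?W = "H ?kv23 (I ?x)"
    note ty = wx w2 w3 ne2 ne3 False
    have IH: "V (asc B ?E3 ?E2 ?Ev) (V (H ?k23 (I ?Ev)) ?kv23) = V (H (I ?E3) ?kv2) ?kv2_3"
      using Cons.IH[OF False ne2 ne3 wx(3) w2 w3] .
    have inst1: "V (H ?k23 (I (hc ?Ev ?x))) (asc B ?E23 ?Ev ?x) = V (asc B (hc ?E3 ?E2) ?Ev ?x) (H (H ?k23 (I ?Ev)) (I ?x))"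
      using asc_nat[of "I ?x" "I ?Ev" ?k23] ty by simp
    have inst2: "V (asc B ?E3 ?E2 (hc ?Ev ?x)) (asc B (hc ?E3 ?E2) ?Ev ?x) = V (H (I ?E3) (asc B ?E2 ?Ev ?x)) (V (asc B ?E3 (hc ?E2 ?Ev) ?x) (H (asc B ?E3 ?E2 ?Ev) (I ?x)))"
      using pentagon[of ?x ?Ev ?E2 ?E3] ty by simp
    have inst3: "V (H (asc B ?E3 ?E2 ?Ev) (I ?x)) (V (H (H ?k23 (I ?Ev)) (I ?x)) (H ?kv23 (I ?x))) = H (V (asc B ?E3 ?E2 ?Ev) (V (H ?k23 (I ?Ev)) ?kv23)) (I ?x)"
      using ty by (simp add: H_V_I)
    have inst4: "H (V (H (I ?E3) ?kv2) ?kv2_3) (I ?x) = V (H (H (I ?E3) ?kv2) (I ?x)) (H ?kv2_3 (I ?x))"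
      using ty by (simp add: H_V_I)
    have inst5: "V (asc B ?E3 (hc ?E2 ?Ev) ?x) (H (H (I ?E3) ?kv2) (I ?x)) = V (H (I ?E3) (H ?kv2 (I ?x))) (asc B ?E3 (ev ?L (v @ w2)) ?x)"
      using asc_nat[of "I ?x" ?kv2 "I ?E3"] ty by simp
    have inst6: "V (H (I ?E3) (asc B ?E2 ?Ev ?x)) (H (I ?E3) (H ?kv2 (I ?x))) = H (I ?E3) (V (asc B ?E2 ?Ev ?x) (H ?kv2 (I ?x)))"
      using ty by (simp add: H_I_V)
    have "V (asc B ?E3 ?E2 (ev X (x # v))) (V (H ?k23 (I (ev X (x # v)))) (kap X (x # v) (w2 @ w3)))
        = V ?A (V (H ?k23 (I (hc ?Ev ?x))) (V (asc B ?E23 ?Ev ?x) ?W))"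
      using ty by (simp only: ev_cons kap_cons append_is_Nil_conv endp_append simp_thms)
    also have "\<dots> = V ?A (V (V (H ?k23 (I (hc ?Ev ?x))) (asc B ?E23 ?Ev ?x)) ?W)"
      using ty by (simp add: vassoc)
    also have "\<dots> = V ?A (V (V (asc B (hc ?E3 ?E2) ?Ev ?x) (H (H ?k23 (I ?Ev)) (I ?x))) ?W)"
      by (simp only: inst1)
    also have "\<dots> = V (V ?A (asc B (hc ?E3 ?E2) ?Ev ?x)) (V (H (H ?k23 (I ?Ev)) (I ?x)) ?W)"
      using ty by (simp add: vassoc)
    also have "\<dots> = V (V (H (I ?E3) (asc B ?E2 ?Ev ?x)) (V (asc B ?E3 (hc ?E2 ?Ev) ?x) (H (asc B ?E3 ?E2 ?Ev) (I ?x)))) (V (H (H ?k23 (I ?Ev)) (I ?x)) ?W)"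
      by (simp only: inst2)
    also have "\<dots> = V (H (I ?E3) (asc B ?E2 ?Ev ?x)) (V (asc B ?E3 (hc ?E2 ?Ev) ?x) (V (H (asc B ?E3 ?E2 ?Ev) (I ?x)) (V (H (H ?k23 (I ?Ev)) (I ?x)) (H ?kv23 (I ?x)))))"
      using ty by (simp add: vassoc)
    also have "\<dots> = V (H (I ?E3) (asc B ?E2 ?Ev ?x)) (V (asc B ?E3 (hc ?E2 ?Ev) ?x) (H (V (asc B ?E3 ?E2 ?Ev) (V (H ?k23 (I ?Ev)) ?kv23)) (I ?x)))"
      by (simp only: inst3)
    also have "\<dots> = V (H (I ?E3) (asc B ?E2 ?Ev ?x)) (V (asc B ?E3 (hc ?E2 ?Ev) ?x) (H (V (H (I ?E3) ?kv2) ?kv2_3) (I ?x)))"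
      by (simp only: IH)
    also have "\<dots> = V (H (I ?E3) (asc B ?E2 ?Ev ?x)) (V (asc B ?E3 (hc ?E2 ?Ev) ?x) (V (H (H (I ?E3) ?kv2) (I ?x)) (H ?kv2_3 (I ?x))))"
      by (simp only: inst4)
    also have "\<dots> = V (H (I ?E3) (asc B ?E2 ?Ev ?x)) (V (V (asc B ?E3 (hc ?E2 ?Ev) ?x) (H (H (I ?E3) ?kv2) (I ?x))) (H ?kv2_3 (I ?x)))"
      using ty by (simp add: vassoc)
    also have "\<dots> = V (H (I ?E3) (asc B ?E2 ?Ev ?x)) (V (V (H (I ?E3) (H ?kv2 (I ?x))) (asc B ?E3 (ev ?L (v @ w2)) ?x)) (H ?kv2_3 (I ?x)))"
      by (simp only: inst5)
    also have "\<dots> = V (V (H (I ?E3) (asc B ?E2 ?Ev ?x)) (H (I ?E3) (H ?kv2 (I ?x)))) (V (asc B ?E3 (ev ?L (v @ w2)) ?x) (H ?kv2_3 (I ?x)))"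
      using ty by (simp add: vassoc)
    also have "\<dots> = V (H (I ?E3) (V (asc B ?E2 ?Ev ?x) (H ?kv2 (I ?x)))) (V (asc B ?E3 (ev ?L (v @ w2)) ?x) (H ?kv2_3 (I ?x)))"
      by (simp only: inst6)
    also have "\<dots> = V (H (I ?E3) (kap X (x # v) w2)) (kap X ((x # v) @ w2) w3)"
      using ty by (simp only: kap_cons append_Cons append_is_Nil_conv endp_append simp_thms)
    finally show ?thesis by simp
  qed
qed

end

context bg begin

lemma kap_nil2': "wfw X w1 \<Longrightarrow> kap X w1 [] = inv2 (lun B (ev X w1))"
  by (cases "w1 = []") (auto simp: kap_nil2 lun_run_idn)

lemma coh: assumes w1: "wfw X w1" and w2: "wfw (endp X w1) w2" and w3: "wfw (endp (endp X w1) w2) w3"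
  shows "V (asc B (ev (endp (endp X w1) w2) w3) (ev (endp X w1) w2) (ev X w1)) (V (H (kap (endp X w1) w2 w3) (I (ev X w1))) (kap X w1 (w2 @ w3)))
  = V (H (I (ev (endp (endp X w1) w2) w3)) (kap X w1 w2)) (kap X (w1 @ w2) w3)"
proof (cases "w1 = []")
  case True
  then show ?thesis using coh_nil1[of X w2 w3] w1 w2 w3 by simp
next
  case n1: False
  show ?thesis
  proof (cases "w2 = []")
    case True
    then show ?thesis using coh_nil2[of X w1 w3] w1 w2 w3 n1 by (simp add: kap_nil2)
  next
    case n2: False
    show ?thesis
    proof (cases "w3 = []")
      case True
      then show ?thesis using coh_nil3[of X w1 w2] w1 w2 w3 n1 n2 by (simp add: kap_nil2)
    next
      case False
      then show ?thesis using coh_main[of w1 w2 w3 X] w1 w2 w3 n1 n2 by simp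
    qed
  qed
qed

definition isom :: "'a \<Rightarrow> 'a \<Rightarrow> bool" where
  "isom f g \<longleftrightarrow> (\<exists>\<beta>. \<beta> \<in> Cell B \<and> d2 \<beta> = f \<and> c2 \<beta> = g)"

lemma isomI: "\<beta> \<in> Cell B \<Longrightarrow> d2 \<beta> = f \<Longrightarrow> c2 \<beta> = g \<Longrightarrow> isom f g" unfolding isom_def by blast
lemma isom_refl: "f \<in> Arr B \<Longrightarrow> isom f f" by (rule isomI[of "I f"]) auto
lemma isom_sym: "isom f g \<Longrightarrow> isom g f" unfolding isom_def by (metis inv2_C inv2_c inv2_d)
lemma isom_trans[trans]: "isom f g \<Longrightarrow> isom g h \<Longrightarrow> isom f h" unfolding isom_def by (metis V_C V_c V_d)
lemma isom_hc: "isom f f' \<Longrightarrow> isom g g' \<Longrightarrow> t f = s g \<Longrightarrow> isom (hc g f) (hc g' f')"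
  unfolding isom_def by (metis H_C H_c H_d)
lemma isom_A: "isom f g \<Longrightarrow> f \<in> Arr B \<and> g \<in> Arr B" unfolding isom_def by auto
lemma isom_st: "isom f g \<Longrightarrow> s f = s g \<and> t f = t g" unfolding isom_def by (metis C_sc C_tc)
lemma isom_rinv: "isom f g \<Longrightarrow> isom (rinv B f) (rinv B g)" unfolding isom_def by (metis rinv2_C rinv2_c rinv2_d)

lemma isom_asc: "f \<in> Arr B \<Longrightarrow> g \<in> Arr B \<Longrightarrow> h \<in> Arr B \<Longrightarrow> t f = s g \<Longrightarrow> t g = s h \<Longrightarrow> isom (hc (hc h g) f) (hc h (hc g f))"
  by (rule isomI[of "asc B h g f"]) auto
lemma isom_lun: "f \<in> Arr B \<Longrightarrow> isom (hc (idn B (t f)) f) f" by (rule isomI[of "lun B f"]) auto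
lemma isom_run: "f \<in> Arr B \<Longrightarrow> isom (hc f (idn B (s f))) f" by (rule isomI[of "run B f"]) auto
lemma isom_eps: "f \<in> Arr B \<Longrightarrow> isom (hc (rinv B f) f) (idn B (s f))" by (rule isomI[of "eps B f"]) auto
lemma isom_eta: "f \<in> Arr B \<Longrightarrow> isom (idn B (t f)) (hc f (rinv B f))" by (rule isomI[of "eta B f"]) auto

lemma pinv_unique: assumes h: "h \<in> Arr B" and f: "f \<in> Arr B" and hs: "s h = t f" and ht: "t h = s f"
  and i: "isom (hc h f) (idn B (s f))" shows "isom h (rinv B f)"
proof -
  have "isom h (hc h (idn B (t f)))" using isom_run[OF h] h hs by (simp add: isom_sym)
  also have "isom \<dots> (hc h (hc f (rinv B f)))" using isom_eta[OF f] h f hs by (intro isom_hc isom_refl) auto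
  also have "isom \<dots> (hc (hc h f) (rinv B f))" using h f hs ht by (intro isom_sym[OF isom_asc]) auto
  also have "isom \<dots> (hc (idn B (s f)) (rinv B f))" using i h f hs ht by (intro isom_hc isom_refl) auto
  also have "isom \<dots> (rinv B f)" using isom_lun[of "rinv B f"] f by simp
  finally show ?thesis .
qed

definition flip :: "'a \<times> bool \<Rightarrow> 'a \<times> bool" where "flip x = (fst x, \<not> snd x)"
definition rw :: "('a \<times> bool) list \<Rightarrow> ('a \<times> bool) list" where "rw w = rev (map flip w)"

lemma flip_simps[simp]: "fst (flip x) = fst x" "ls (flip x) = lg x" "lg (flip x) = ls x"
  by (auto simp: flip_def ls_def lg_def)
lemma rw_Nil[simp]: "rw [] = []" by (simp add: rw_def)
lemma rw_Cons[simp]: "rw (x # v) = rw v @ [flip x]" by (simp add: rw_def)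
lemma rw_append: "rw (v @ w) = rw w @ rw v" by (simp add: rw_def)
lemma rw_rw[simp]: "rw (rw w) = w" by (induction w) (auto simp: flip_def rw_append)

lemma rw_wf: "wfw X w \<Longrightarrow> wfw (endp X w) (rw w) \<and> endp (endp X w) (rw w) = X"
  by (induction w arbitrary: X) auto
lemma rw_wfw[simp]: "wfw X w \<Longrightarrow> wfw (endp X w) (rw w)" using rw_wf by blast
lemma rw_endp[simp]: "wfw X w \<Longrightarrow> endp (endp X w) (rw w) = X" using rw_wf by blast

lemma isom_ev_app: "wfw X w1 \<Longrightarrow> wfw (endp X w1) w2 \<Longrightarrow> isom (ev X (w1 @ w2)) (hc (ev (endp X w1) w2) (ev X w1))"
  by (rule isomI[of "kap X w1 w2"]) auto

lemma isom_flip: assumes x: "fst x \<in> Arr B" shows "isom (lt (flip x)) (rinv B (lt x))"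
proof (cases "snd x")
  case True
  then show ?thesis using x by (simp add: lt_def flip_def isom_refl)
next
  case False
  have "isom (fst x) (rinv B (rinv B (fst x)))"
    using x isom_sym[OF isom_eta[of "fst x"]] by (intro pinv_unique) auto
  then show ?thesis using False by (simp add: lt_def flip_def)
qed

lemma isom_rinv_hc: assumes f: "f \<in> Arr B" and g: "g \<in> Arr B" and fg: "t f = s g"
  shows "isom (rinv B (hc g f)) (hc (rinv B f) (rinv B g))"
proof -
  have "isom (hc (hc (rinv B f) (rinv B g)) (hc g f)) (hc (rinv B f) (hc (rinv B g) (hc g f)))"
    using f g fg by (intro isom_asc) auto
  also have "isom \<dots> (hc (rinv B f) (hc (hc (rinv B g) g) f))"
    using f g fg by (intro isom_hc isom_refl isom_sym[OF isom_asc]) auto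
  also have "isom \<dots> (hc (rinv B f) (hc (idn B (t f)) f))"
    using f g fg isom_eps[of g] by (intro isom_hc isom_refl) auto
  also have "isom \<dots> (hc (rinv B f) f)"
    using f g fg isom_lun[of f] by (intro isom_hc isom_refl) auto
  also have "isom \<dots> (idn B (s f))" using isom_eps[of f] f by simp
  finally have "isom (hc (hc (rinv B f) (rinv B g)) (hc g f)) (idn B (s (hc g f)))" using f g fg by simp
  then have "isom (hc (rinv B f) (rinv B g)) (rinv B (hc g f))"
    using f g fg by (intro pinv_unique) auto
  then show ?thesis by (rule isom_sym)
qed

lemma psi_ex: "wfw X w \<Longrightarrow> isom (rinv B (ev X w)) (ev (endp X w) (rw w))"
proof (induction w arbitrary: X)
  case Nil
  have "isom (idn B X) (rinv B (idn B X))"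
    using Nil isom_lun[of "idn B X"] by (intro pinv_unique) auto
  then show ?case by (simp add: isom_sym)
next
  case (Cons x v)
  have x: "fst x \<in> Arr B" "ls x = X" "wfw (lg x) v" using Cons.prems by auto
  let ?Z = "endp (lg x) v"
  have e: "isom (ev X (x # v)) (hc (ev (lg x) v) (lt x))"
    using isom_ev_app[of X "[x]" v] x by simp
  have "isom (rinv B (ev X (x # v))) (rinv B (hc (ev (lg x) v) (lt x)))" using isom_rinv[OF e] .
  also have "isom \<dots> (hc (rinv B (lt x)) (rinv B (ev (lg x) v)))"
    using x by (intro isom_rinv_hc) auto
  also have "isom \<dots> (hc (lt (flip x)) (ev ?Z (rw v)))"
    using x Cons.IH[OF x(3)] isom_sym[OF isom_flip[of x]] by (intro isom_hc) auto
  also have "isom \<dots> (ev ?Z (rw v @ [flip x]))"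
    using isom_sym[OF isom_ev_app[of ?Z "rw v" "[flip x]"]] x ls_O[OF x(1)] by simp
  finally show ?case by simp
qed

end

context bg begin


definition Ev :: "'o \<times> ('a \<times> bool) list \<times> 'o \<Rightarrow> 'a" where "Ev u = ev (fst u) (fst (snd u))"
definition SArr :: "('o \<times> ('a \<times> bool) list \<times> 'o) set" where
  "SArr = {u. wfw (fst u) (fst (snd u)) \<and> snd (snd u) = endp (fst u) (fst (snd u))}"
definition cat :: "'o \<times> ('a \<times> bool) list \<times> 'o \<Rightarrow> 'o \<times> ('a \<times> bool) list \<times> 'o \<Rightarrow> 'o \<times> ('a \<times> bool) list \<times> 'o" where
  "cat g f = (fst f, fst (snd f) @ fst (snd g), snd (snd g))"
definition K :: "'o \<times> ('a \<times> bool) list \<times> 'o \<Rightarrow> 'o \<times> ('a \<times> bool) list \<times> 'o \<Rightarrow> 'b" where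
  "K f g = kap (fst f) (fst (snd f)) (fst (snd g))"
definition SCell :: "(('o \<times> ('a \<times> bool) list \<times> 'o) \<times> 'b \<times> ('o \<times> ('a \<times> bool) list \<times> 'o)) set" where
  "SCell = {c. fst c \<in> SArr \<and> snd (snd c) \<in> SArr \<and> fst (fst c) = fst (snd (snd c)) \<and>
      snd (snd (fst c)) = snd (snd (snd (snd c))) \<and> fst (snd c) \<in> hom2 B (Ev (fst c)) (Ev (snd (snd c)))}"
definition Svcomp where "Svcomp y x = (fst x, V (fst (snd y)) (fst (snd x)), snd (snd y))"
definition Svid where "Svid u = (u, I (Ev u), u)"
definition Shcomp2 where "Shcomp2 b a = (cat (fst b) (fst a),
   V (inv2 (K (snd (snd a)) (snd (snd b)))) (V (H (fst (snd b)) (fst (snd a))) (K (fst a) (fst b))),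
   cat (snd (snd b)) (snd (snd a)))"
definition Sidn :: "'o \<Rightarrow> 'o \<times> ('a \<times> bool) list \<times> 'o" where "Sidn X = (X, [], X)"
definition Srinv :: "'o \<times> ('a \<times> bool) list \<times> 'o \<Rightarrow> 'o \<times> ('a \<times> bool) list \<times> 'o" where
  "Srinv u = (snd (snd u), rw (fst (snd u)), fst u)"
definition psi where "psi u = (if rinv B (Ev u) = Ev (Srinv u) then I (rinv B (Ev u))
   else (SOME \<beta>. \<beta> \<in> hom2 B (rinv B (Ev u)) (Ev (Srinv u))))"
definition Srinv2 where "Srinv2 c = (Srinv (fst c), V (psi (snd (snd c))) (V (rinv2 B (fst (snd c))) (inv2 (psi (fst c)))), Srinv (snd (snd c)))"
definition Sasc where "Sasc h g f = Svid (cat (cat h g) f)"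
definition Seps where "Seps f = (cat (Srinv f) f, V (eps B (Ev f)) (V (H (inv2 (psi f)) (I (Ev f))) (K f (Srinv f))), Sidn (fst f))"
definition Seta where "Seta f = (Sidn (snd (snd f)), V (inv2 (K (Srinv f) f)) (V (H (I (Ev f)) (psi f)) (eta B (Ev f))), cat f (Srinv f))"

definition SB :: "('o, 'o \<times> ('a \<times> bool) list \<times> 'o, ('o \<times> ('a \<times> bool) list \<times> 'o) \<times> 'b \<times> ('o \<times> ('a \<times> bool) list \<times> 'o)) bigroupoid" where
  "SB = \<lparr>Obj = Obj B, Arr = SArr, src = fst, tgt = (\<lambda>u. snd (snd u)), Cell = SCell, dom2 = fst, cod2 = (\<lambda>c. snd (snd c)),
     vcomp = Svcomp, vid = Svid, hcomp = cat, hcomp2 = Shcomp2, idn = Sidn, rinv = Srinv, rinv2 = Srinv2,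
     asc = Sasc, lun = Svid, run = Svid, eps = Seps, eta = Seta\<rparr>"

lemma SB_simps[simp]: "Obj SB = Obj B" "Arr SB = SArr" "src SB = fst" "tgt SB = (\<lambda>u. snd (snd u))" "Cell SB = SCell"
  "dom2 SB = fst" "cod2 SB = (\<lambda>c. snd (snd c))" "vcomp SB = Svcomp" "vid SB = Svid" "hcomp SB = cat"
  "hcomp2 SB = Shcomp2" "idn SB = Sidn" "rinv SB = Srinv" "rinv2 SB = Srinv2" "asc SB = Sasc"
  "lun SB = Svid" "run SB = Svid" "eps SB = Seps" "eta SB = Seta"
  by (simp_all add: SB_def)

lemma Ev_simp[simp]: "Ev (X, w, Y) = ev X w" by (simp add: Ev_def)
lemma SArr_iff[simp]: "(X, w, Y) \<in> SArr \<longleftrightarrow> wfw X w \<and> Y = endp X w" by (simp add: SArr_def)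
lemma cat_simp[simp]: "cat (Y', w2, Z) (X, w1, Y) = (X, w1 @ w2, Z)" by (simp add: cat_def)
lemma K_simp[simp]: "K (X, w1, Y) (Y', w2, Z) = kap X w1 w2" by (simp add: K_def)
lemma Sidn_simp[simp]: "Sidn X = (X, [], X)" by (simp add: Sidn_def)
lemma Srinv_simp[simp]: "Srinv (X, w, Y) = (Y, rw w, X)" by (simp add: Srinv_def)
lemma Svid_simp[simp]: "Svid (X, w, Y) = ((X, w, Y), I (ev X w), (X, w, Y))" by (simp add: Svid_def)
lemma Svcomp_simp[simp]: "Svcomp (v', b, w) (u, a, v) = (u, V b a, w)" by (simp add: Svcomp_def)
lemma Shcomp2_simp[simp]: "Shcomp2 (g, b, g') (f, a, f') = (cat g f, V (inv2 (K f' g')) (V (H b a) (K f g)), cat g' f')"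
  by (simp add: Shcomp2_def)
lemma Srinv2_simp[simp]: "Srinv2 (u, a, v) = (Srinv u, V (psi v) (V (rinv2 B a) (inv2 (psi u))), Srinv v)"
  by (simp add: Srinv2_def)

lemma SCell_iff[simp]: "((X, w, Y), b, (X', w', Y')) \<in> SCell \<longleftrightarrow>
   wfw X w \<and> Y = endp X w \<and> wfw X' w' \<and> Y' = endp X' w' \<and> X = X' \<and> Y = Y' \<and> b \<in> Cell B \<and> d2 b = ev X w \<and> c2 b = ev X' w'"
  by (auto simp: SCell_def hom2_iff)

lemma hom2E: assumes "c \<in> hom2 SB u v"
  obtains X w Y w' b where "u = (X, w, Y)" "v = (X, w', Y)" "c = (u, b, v)" "wfw X w" "Y = endp X w"
     "wfw X w'" "Y = endp X w'" "b \<in> Cell B" "d2 b = ev X w" "c2 b = ev X w'"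
proof -
  obtain u' b v' where c: "c = (u', b, v')" by (cases c) auto
  obtain X w Y where u: "u = (X, w, Y)" by (cases u) auto
  obtain X' w' Y' where v: "v = (X', w', Y')" by (cases v) auto
  show ?thesis using assms c u v by (intro that[of X w Y w' b]) (auto simp: hom2_def)
qed

lemma hom2I: "wfw X w \<Longrightarrow> Y = endp X w \<Longrightarrow> wfw X w' \<Longrightarrow> Y = endp X w' \<Longrightarrow> b \<in> Cell B \<Longrightarrow> d2 b = ev X w \<Longrightarrow> c2 b = ev X w' \<Longrightarrow>
  ((X, w, Y), b, (X, w', Y)) \<in> hom2 SB (X, w, Y) (X, w', Y)"
  by (simp add: hom2_def)

lemma homE: assumes "f \<in> hom SB X Y" obtains w where "f = (X, w, Y)" "wfw X w" "Y = endp X w"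
  using assms by (cases f) (auto simp: hom_def)
lemma hom_iff_S: "(X', w, Y') \<in> hom SB X Y \<longleftrightarrow> X' = X \<and> Y' = Y \<and> wfw X w \<and> Y = endp X w"
  by (auto simp: hom_def)

lemma psi_prop: assumes "wfw X w" shows "psi (X, w, endp X w) \<in> hom2 B (rinv B (ev X w)) (ev (endp X w) (rw w))"
proof (cases "rinv B (ev X w) = ev (endp X w) (rw w)")
  case True then show ?thesis using assms by (simp add: psi_def hom2_iff)
next
  case False
  have "\<exists>\<beta>. \<beta> \<in> hom2 B (rinv B (ev X w)) (ev (endp X w) (rw w))"
    using psi_ex[OF assms] by (auto simp: isom_def hom2_iff)
  then show ?thesis using False by (simp add: psi_def) (rule someI_ex)
qed
lemma psi_C[simp]: "wfw X w \<Longrightarrow> Y = endp X w \<Longrightarrow> psi (X, w, Y) \<in> Cell B" using psi_prop hom2_iff by blast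
lemma psi_d[simp]: "wfw X w \<Longrightarrow> Y = endp X w \<Longrightarrow> d2 (psi (X, w, Y)) = rinv B (ev X w)" using psi_prop hom2_iff by blast
lemma psi_c[simp]: "wfw X w \<Longrightarrow> Y = endp X w \<Longrightarrow> c2 (psi (X, w, Y)) = ev Y (rw w)" using psi_prop hom2_iff by blast
lemma rw_wfw'[simp]: "wfw X w \<Longrightarrow> Y = endp X w \<Longrightarrow> wfw Y (rw w)" by simp
lemma rw_endp'[simp]: "wfw X w \<Longrightarrow> Y = endp X w \<Longrightarrow> endp Y (rw w) = X" by simp

end

context bg begin

lemma ascnat_abs:
  assumes C: "a \<in> Cell B" "b \<in> Cell B" "c \<in> Cell B" "k1 \<in> Cell B" "k23 \<in> Cell B" "k12 \<in> Cell B" "k123 \<in> Cell B"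
    "k1' \<in> Cell B" "k23' \<in> Cell B" "k12' \<in> Cell B" "k123' \<in> Cell B"
  and ty: "d2 a = Ea" "c2 a = Ea'" "d2 b = Eb" "c2 b = Eb'" "d2 c = Ec" "c2 c = Ec'"
    "t Ea = s Eb" "t Eb = s Ec"
    "d2 k1 = Eabc" "c2 k1 = hc Ebc Ea" "d2 k23 = Ebc" "c2 k23 = hc Ec Eb"
    "d2 k12 = Eab" "c2 k12 = hc Eb Ea" "d2 k123 = Eabc" "c2 k123 = hc Ec Eab"
    "d2 k1' = Eabc'" "c2 k1' = hc Ebc' Ea'" "d2 k23' = Ebc'" "c2 k23' = hc Ec' Eb'"
    "d2 k12' = Eab'" "c2 k12' = hc Eb' Ea'" "d2 k123' = Eabc'" "c2 k123' = hc Ec' Eab'"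
  and coh1: "V (asc B Ec Eb Ea) (V (H k23 (I Ea)) k1) = V (H (I Ec) k12) k123"
  and coh2: "V (asc B Ec' Eb' Ea') (V (H k23' (I Ea')) k1') = V (H (I Ec') k12') k123'"
  shows "V (inv2 k1') (V (H (V (inv2 k23') (V (H c b) k23)) a) k1) = V (inv2 k123') (V (H c (V (inv2 k12') (V (H b a) k12))) k123)"
proof -
  have A: "Ea \<in> Arr B" "Ea' \<in> Arr B" "Eb \<in> Arr B" "Eb' \<in> Arr B" "Ec \<in> Arr B" "Ec' \<in> Arr B"
    "Eabc \<in> Arr B" "Ebc \<in> Arr B" "Eab \<in> Arr B" "Eabc' \<in> Arr B" "Ebc' \<in> Arr B" "Eab' \<in> Arr B"
    using C_d2[OF C(1)] C_c2[OF C(1)] C_d2[OF C(2)] C_c2[OF C(2)] C_d2[OF C(3)] C_c2[OF C(3)]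
     C_d2[OF C(4)] C_d2[OF C(5)] C_d2[OF C(6)] C_d2[OF C(8)] C_d2[OF C(9)] C_d2[OF C(10)]
    by (simp_all only: ty)
  have st: "t Ea' = t Ea" "t Eb' = t Eb" "s Eb' = s Eb" "s Ec' = s Ec"
    using C_tc[OF C(1)] C_tc[OF C(2)] C_sc[OF C(2)] C_sc[OF C(3)] ty by simp_all
  have e12: "t Eab = t Eb" "s Eab = s Ea" using C_tc[OF C(6)] C_sc[OF C(6)] ty(13,14) ty(7) A by auto
  have e23: "t Ebc = t Ec" "s Ebc = s Eb" using C_tc[OF C(5)] C_sc[OF C(5)] ty(11,12) ty(8) A by auto
  have e123: "t Eabc = t Ec" "s Eabc = s Ea" using C_tc[OF C(4)] C_sc[OF C(4)] ty(9,10) ty(7) e23 A by auto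
  have e12': "t Eab' = t Eb'" "s Eab' = s Ea'" using C_tc[OF C(10)] C_sc[OF C(10)] ty(21,22) ty(7) st A by auto
  have e23': "t Ebc' = t Ec'" "s Ebc' = s Eb'" using C_tc[OF C(9)] C_sc[OF C(9)] ty(19,20) ty(8) st A by auto
  have e123': "t Eabc' = t Ec'" "s Eabc' = s Ea'" using C_tc[OF C(8)] C_sc[OF C(8)] ty(17,18) ty(7) st e23' A by auto
  note st2 = e12 e23 e123
  note st3 = e12' e23' e123'
  note T = C ty A st st2 st3
  let ?P = "V (asc B Ec' Eb' Ea') (V (H k23' (I Ea')) k1')"
  let ?Q = "V (asc B Ec Eb Ea) (V (H k23 (I Ea)) k1)"
  let ?X = "V (inv2 k1') (V (H (V (inv2 k23') (V (H c b) k23)) a) k1)"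
  let ?Y = "V (inv2 k123') (V (H c (V (inv2 k12') (V (H b a) k12))) k123)"
  have i1: "V (H (I Ec') k12') (H c (V (inv2 k12') (V (H b a) k12))) = H (V (I Ec') c) (V k12' (V (inv2 k12') (V (H b a) k12)))"
    using T by (intro interchange[symmetric]) auto
  have i2: "H c (V (H b a) k12) = V (H c (H b a)) (H (I Ec) k12)"
    using T interchange[of k12 "H b a" "I Ec" c] by simp
  have eY: "V ?P ?Y = V (H c (H b a)) (V (H (I Ec) k12) k123)"
  proof -
    have "V ?P ?Y = V (V (H (I Ec') k12') k123') ?Y" using coh2 by simp
    also have "\<dots> = V (H (I Ec') k12') (V k123' (V (inv2 k123') (V (H c (V (inv2 k12') (V (H b a) k12))) k123)))"
      using T by (simp add: vassoc)
    also have "\<dots> = V (V (H (I Ec') k12') (H c (V (inv2 k12') (V (H b a) k12)))) k123"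
      using T by (simp add: vassoc)
    also have "\<dots> = V (H (V (I Ec') c) (V k12' (V (inv2 k12') (V (H b a) k12)))) k123"
      by (simp only: i1)
    also have "\<dots> = V (H c (V (H b a) k12)) k123" using T by simp
    also have "\<dots> = V (V (H c (H b a)) (H (I Ec) k12)) k123" by (simp only: i2)
    also have "\<dots> = V (H c (H b a)) (V (H (I Ec) k12) k123)" using T by (simp add: vassoc)
    finally show ?thesis .
  qed
  have j1: "V (H k23' (I Ea')) (H (V (inv2 k23') (V (H c b) k23)) a) = H (V k23' (V (inv2 k23') (V (H c b) k23))) (V (I Ea') a)"
    using T by (intro interchange[symmetric]) auto
  have j2: "H (V (H c b) k23) a = V (H (H c b) a) (H k23 (I Ea))"
    using T interchange[of "I Ea" a k23 "H c b"] by simp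
  have j3: "V (asc B Ec' Eb' Ea') (H (H c b) a) = V (H c (H b a)) (asc B Ec Eb Ea)"
    using T asc_nat[of a b c] by simp
  have eX: "V ?P ?X = V (H c (H b a)) ?Q"
  proof -
    have "V ?P ?X = V (asc B Ec' Eb' Ea') (V (H k23' (I Ea')) (V k1' (V (inv2 k1') (V (H (V (inv2 k23') (V (H c b) k23)) a) k1))))"
      using T by (simp add: vassoc)
    also have "\<dots> = V (asc B Ec' Eb' Ea') (V (V (H k23' (I Ea')) (H (V (inv2 k23') (V (H c b) k23)) a)) k1)"
      using T by (simp add: vassoc)
    also have "\<dots> = V (asc B Ec' Eb' Ea') (V (H (V k23' (V (inv2 k23') (V (H c b) k23))) (V (I Ea') a)) k1)"
      by (simp only: j1)
    also have "\<dots> = V (asc B Ec' Eb' Ea') (V (H (V (H c b) k23) a) k1)" using T by simp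
    also have "\<dots> = V (asc B Ec' Eb' Ea') (V (V (H (H c b) a) (H k23 (I Ea))) k1)" by (simp only: j2)
    also have "\<dots> = V (V (asc B Ec' Eb' Ea') (H (H c b) a)) (V (H k23 (I Ea)) k1)" using T by (simp add: vassoc)
    also have "\<dots> = V (V (H c (H b a)) (asc B Ec Eb Ea)) (V (H k23 (I Ea)) k1)" by (simp only: j3)
    also have "\<dots> = V (H c (H b a)) ?Q" using T by (simp add: vassoc)
    finally show ?thesis .
  qed
  have "V ?P ?X = V ?P ?Y" using eX eY coh1 by simp
  then show ?thesis by (rule cancel_L[rotated 5]) (use T in simp_all)
qed

end

context bg begin

lemma eps_abs:
  assumes C: "a \<in> Cell B" "pf \<in> Cell B" "pg \<in> Cell B" "kf \<in> Cell B" "kg \<in> Cell B"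
  and ty: "d2 a = F" "c2 a = G" "d2 pf = rinv B F" "c2 pf = Fs" "d2 pg = rinv B G" "c2 pg = Gs"
     "c2 kf = hc Fs F" "c2 kg = hc Gs G"
  shows "V (V (eps B G) (V (H (inv2 pg) (I G)) kg)) (V (inv2 kg) (V (H (V pg (V (rinv2 B a) (inv2 pf))) a) kf))
       = V (eps B F) (V (H (inv2 pf) (I F)) kf)"
proof -
  have A: "F \<in> Arr B" "G \<in> Arr B" using C_d2[OF C(1)] C_c2[OF C(1)] by (simp_all only: ty)
  have st: "s G = s F" "t G = t F" using C_sc[OF C(1)] C_tc[OF C(1)] by (simp_all only: ty)
  have sF: "s Fs = t F" "t Fs = s F" using C_sc[OF C(2)] C_tc[OF C(2)] A by (simp_all add: ty)
  have sG: "s Gs = t G" "t Gs = s G" using C_sc[OF C(3)] C_tc[OF C(3)] A by (simp_all add: ty)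
  note T = C ty A st sF sG
  let ?M = "V pg (V (rinv2 B a) (inv2 pf))"
  have i1: "V (H (inv2 pg) (I G)) (H ?M a) = H (V (inv2 pg) ?M) (V (I G) a)"
    using T by (intro interchange[symmetric]) auto
  have i2: "H (V (rinv2 B a) (inv2 pf)) a = V (H (rinv2 B a) a) (H (inv2 pf) (I F))"
    using T interchange[of "I F" a "inv2 pf" "rinv2 B a"] by simp
  have i3: "V (eps B G) (H (rinv2 B a) a) = eps B F" using eps_nat[of a] T by simp
  have "V (V (eps B G) (V (H (inv2 pg) (I G)) kg)) (V (inv2 kg) (V (H ?M a) kf))
      = V (eps B G) (V (H (inv2 pg) (I G)) (V kg (V (inv2 kg) (V (H ?M a) kf))))"
    using T by (simp add: vassoc)
  also have "\<dots> = V (eps B G) (V (V (H (inv2 pg) (I G)) (H ?M a)) kf)"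
    using T by (simp add: vassoc)
  also have "\<dots> = V (eps B G) (V (H (V (inv2 pg) ?M) (V (I G) a)) kf)" by (simp only: i1)
  also have "\<dots> = V (eps B G) (V (H (V (rinv2 B a) (inv2 pf)) a) kf)" using T by simp
  also have "\<dots> = V (eps B G) (V (V (H (rinv2 B a) a) (H (inv2 pf) (I F))) kf)" by (simp only: i2)
  also have "\<dots> = V (V (eps B G) (H (rinv2 B a) a)) (V (H (inv2 pf) (I F)) kf)" using T by (simp add: vassoc)
  also have "\<dots> = V (eps B F) (V (H (inv2 pf) (I F)) kf)" by (simp only: i3)
  finally show ?thesis .
qed

lemma eta_abs:
  assumes C: "a \<in> Cell B" "pf \<in> Cell B" "pg \<in> Cell B" "mf \<in> Cell B" "mg \<in> Cell B"
  and ty: "d2 a = F" "c2 a = G" "d2 pf = rinv B F" "c2 pf = Fs" "d2 pg = rinv B G" "c2 pg = Gs"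
     "c2 mf = hc F Fs" "c2 mg = hc G Gs"
  shows "V (V (inv2 mg) (V (H a (V pg (V (rinv2 B a) (inv2 pf)))) mf)) (V (inv2 mf) (V (H (I F) pf) (eta B F)))
       = V (inv2 mg) (V (H (I G) pg) (eta B G))"
proof -
  have A: "F \<in> Arr B" "G \<in> Arr B" using C_d2[OF C(1)] C_c2[OF C(1)] by (simp_all only: ty)
  have st: "s G = s F" "t G = t F" using C_sc[OF C(1)] C_tc[OF C(1)] by (simp_all only: ty)
  have sF: "s Fs = t F" "t Fs = s F" using C_sc[OF C(2)] C_tc[OF C(2)] A by (simp_all add: ty)
  have sG: "s Gs = t G" "t Gs = s G" using C_sc[OF C(3)] C_tc[OF C(3)] A by (simp_all add: ty)
  note T = C ty A st sF sG
  let ?N = "V pg (V (rinv2 B a) (inv2 pf))"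
  have i1: "V (H a ?N) (H (I F) pf) = H (V a (I F)) (V ?N pf)"
    using T by (intro interchange[symmetric]) auto
  have i0: "V ?N pf = V pg (rinv2 B a)" using T by (simp add: vassoc)
  have i2: "H a (V pg (rinv2 B a)) = V (H (I G) pg) (H a (rinv2 B a))"
    using T interchange[of "rinv2 B a" pg a "I G"] by simp
  have i3: "V (H a (rinv2 B a)) (eta B F) = eta B G" using eta_nat[of a] T by simp
  have "V (V (inv2 mg) (V (H a ?N) mf)) (V (inv2 mf) (V (H (I F) pf) (eta B F)))
      = V (inv2 mg) (V (H a ?N) (V mf (V (inv2 mf) (V (H (I F) pf) (eta B F)))))"
    using T by (simp add: vassoc)
  also have "\<dots> = V (inv2 mg) (V (V (H a ?N) (H (I F) pf)) (eta B F))"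
    using T by (simp add: vassoc)
  also have "\<dots> = V (inv2 mg) (V (H (V a (I F)) (V ?N pf)) (eta B F))" by (simp only: i1)
  also have "\<dots> = V (inv2 mg) (V (H a (V pg (rinv2 B a))) (eta B F))" using T i0 by simp
  also have "\<dots> = V (inv2 mg) (V (V (H (I G) pg) (H a (rinv2 B a))) (eta B F))" by (simp only: i2)
  also have "\<dots> = V (inv2 mg) (V (H (I G) pg) (V (H a (rinv2 B a)) (eta B F)))" using T by (simp add: vassoc)
  also have "\<dots> = V (inv2 mg) (V (H (I G) pg) (eta B G))" by (simp only: i3)
  finally show ?thesis .
qed

lemma solveL: "V g x = y \<Longrightarrow> g \<in> Cell B \<Longrightarrow> x \<in> Cell B \<Longrightarrow> d2 g = c2 x \<Longrightarrow> x = V (inv2 g) y"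
  by (metis inv2_L')

lemma zig_abs:
  assumes C: "ps \<in> Cell B" "kA \<in> Cell B" "kB \<in> Cell B" "kC \<in> Cell B" "kD \<in> Cell B" and F: "F \<in> Arr B"
  and ty: "d2 ps = rinv B F" "c2 ps = Fs" "c2 kA = hc Fs F" "c2 kB = hc F Fs" "d2 kC = EC" "c2 kC = hc EB F"
     "d2 kB = EB" "d2 kA = EA" "d2 kD = EC" "c2 kD = hc F EA"
  and coh: "V (asc B F Fs F) (V (H kB (I F)) kC) = V (H (I F) kA) kD"
  shows "V (run B F) (V (H (I F) (V (eps B F) (V (H (inv2 ps) (I F)) kA))) (V kD (V (inv2 kC) (V (H (V (inv2 kB) (V (H (I F) ps) (eta B F))) (I F)) (inv2 (lun B F))))))
     = I F"
proof -
  have sF: "s Fs = t F" "t Fs = s F" using C_sc[OF C(1)] C_tc[OF C(1)] F by (simp_all add: ty)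
  have A: "Fs \<in> Arr B" "EA \<in> Arr B" "EB \<in> Arr B" "EC \<in> Arr B" using C_c2[OF C(1)] C_d2[OF C(2)] C_d2[OF C(3)] C_d2[OF C(4)] by (simp_all only: ty)
  have sA: "s EA = s F" "t EA = s F" using C_sc[OF C(2)] C_tc[OF C(2)] F A sF by (simp_all add: ty)
  have sB: "s EB = t F" "t EB = t F" using C_sc[OF C(3)] C_tc[OF C(3)] F A sF by (simp_all add: ty)
  have sC: "s EC = s F" "t EC = t F" using C_sc[OF C(4)] C_tc[OF C(4)] F A sF sB by (simp_all add: ty)
  note T = C F ty sF A sA sB sC
  let ?e = "V (eps B F) (V (H (inv2 ps) (I F)) kA)" and ?n = "V (inv2 kB) (V (H (I F) ps) (eta B F))"
  let ?R = "V (H ?n (I F)) (inv2 (lun B F))"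
  have kD: "kD = V (inv2 (H (I F) kA)) (V (asc B F Fs F) (V (H kB (I F)) kC))"
    by (rule solveL[OF coh[symmetric]]) (use T in simp_all)
  have s1: "V kD (V (inv2 kC) ?R) = V (inv2 (H (I F) kA)) (V (asc B F Fs F) (V (H kB (I F)) ?R))"
    unfolding kD using T by (simp add: vassoc)
  have s2: "V (H (I F) ?e) (inv2 (H (I F) kA)) = H (I F) (V (eps B F) (H (inv2 ps) (I F)))"
  proof -
    have "V (H (I F) ?e) (inv2 (H (I F) kA)) = V (H (I F) ?e) (H (I F) (inv2 kA))" using T by (simp add: inv2_H)
    also have "\<dots> = H (V (I F) (I F)) (V ?e (inv2 kA))" using T by (intro interchange[symmetric]) auto
    also have "\<dots> = H (I F) (V (eps B F) (H (inv2 ps) (I F)))" using T by (simp add: vassoc)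
    finally show ?thesis .
  qed
  have s3: "V (H kB (I F)) ?R = V (H (H (I F) ps) (I F)) (V (H (eta B F) (I F)) (inv2 (lun B F)))"
  proof -
    have "V (H kB (I F)) ?R = V (V (H kB (I F)) (H ?n (I F))) (inv2 (lun B F))" using T by (simp add: vassoc)
    also have "V (H kB (I F)) (H ?n (I F)) = H (V kB ?n) (V (I F) (I F))" using T by (intro interchange[symmetric]) auto
    also have "\<dots> = V (H (H (I F) ps) (I F)) (H (eta B F) (I F))" using T interchange[of "I F" "I F" "eta B F" "H (I F) ps"] by simp
    finally show ?thesis using T by (simp add: vassoc)
  qed
  have s4: "V (asc B F Fs F) (H (H (I F) ps) (I F)) = V (H (I F) (H ps (I F))) (asc B F (rinv B F) F)"
    using asc_nat[of "I F" ps "I F"] T by simp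
  have s5: "V (H (I F) (V (eps B F) (H (inv2 ps) (I F)))) (H (I F) (H ps (I F))) = H (I F) (eps B F)"
  proof -
    have "V (H (I F) (V (eps B F) (H (inv2 ps) (I F)))) (H (I F) (H ps (I F))) = H (V (I F) (I F)) (V (V (eps B F) (H (inv2 ps) (I F))) (H ps (I F)))"
      using T by (intro interchange[symmetric]) auto
    also have "\<dots> = H (I F) (V (eps B F) (V (H (inv2 ps) (I F)) (H ps (I F))))" using T by (simp add: vassoc)
    also have "V (H (inv2 ps) (I F)) (H ps (I F)) = H (V (inv2 ps) ps) (V (I F) (I F))" using T by (intro interchange[symmetric]) auto
    finally show ?thesis using T by simp
  qed
  have z: "V (run B F) (V (H (I F) (eps B F)) (V (asc B F (rinv B F) F) (H (eta B F) (I F)))) = lun B F"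
    using zigzag[OF F] .
  have "V (run B F) (V (H (I F) ?e) (V kD (V (inv2 kC) ?R)))
     = V (run B F) (V (H (I F) ?e) (V (inv2 (H (I F) kA)) (V (asc B F Fs F) (V (H (H (I F) ps) (I F)) (V (H (eta B F) (I F)) (inv2 (lun B F)))))))"
    by (simp only: s1 s3)
  also have "\<dots> = V (run B F) (V (V (H (I F) ?e) (inv2 (H (I F) kA))) (V (V (asc B F Fs F) (H (H (I F) ps) (I F))) (V (H (eta B F) (I F)) (inv2 (lun B F)))))"
    using T by (simp add: vassoc)
  also have "\<dots> = V (run B F) (V (H (I F) (V (eps B F) (H (inv2 ps) (I F)))) (V (V (H (I F) (H ps (I F))) (asc B F (rinv B F) F)) (V (H (eta B F) (I F)) (inv2 (lun B F)))))"
    by (simp only: s2 s4)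
  also have "\<dots> = V (run B F) (V (V (H (I F) (V (eps B F) (H (inv2 ps) (I F)))) (H (I F) (H ps (I F)))) (V (asc B F (rinv B F) F) (V (H (eta B F) (I F)) (inv2 (lun B F)))))"
    using T by (simp add: vassoc)
  also have "\<dots> = V (run B F) (V (H (I F) (eps B F)) (V (asc B F (rinv B F) F) (V (H (eta B F) (I F)) (inv2 (lun B F)))))"
    by (simp only: s5)
  also have "\<dots> = V (V (run B F) (V (H (I F) (eps B F)) (V (asc B F (rinv B F) F) (H (eta B F) (I F))))) (inv2 (lun B F))"
    using T by (simp add: vassoc)
  also have "\<dots> = I F" using z T by simp
  finally show ?thesis .
qed

end

context bg begin

lemma lun_conj: assumes a: "a \<in> Cell B" shows "V (lun B (c2 a)) (V (H (I (idn B (t (d2 a)))) a) (inv2 (lun B (d2 a)))) = a"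
proof -
  have "V (lun B (c2 a)) (V (H (I (idn B (t (d2 a)))) a) (inv2 (lun B (d2 a)))) = V (V (lun B (c2 a)) (H (I (idn B (t (d2 a)))) a)) (inv2 (lun B (d2 a)))"
    using a by (simp add: vassoc)
  also have "\<dots> = V (V a (lun B (d2 a))) (inv2 (lun B (d2 a)))" using lun_nat[OF a] by simp
  also have "\<dots> = a" using a by (simp add: vassoc)
  finally show ?thesis .
qed
lemma run_conj: assumes a: "a \<in> Cell B" shows "V (run B (c2 a)) (V (H a (I (idn B (s (d2 a))))) (inv2 (run B (d2 a)))) = a"
proof -
  have "V (run B (c2 a)) (V (H a (I (idn B (s (d2 a))))) (inv2 (run B (d2 a)))) = V (V (run B (c2 a)) (H a (I (idn B (s (d2 a)))))) (inv2 (run B (d2 a)))"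
    using a by (simp add: vassoc)
  also have "\<dots> = V (V a (run B (d2 a))) (inv2 (run B (d2 a)))" using run_nat[OF a] by simp
  also have "\<dots> = a" using a by (simp add: vassoc)
  finally show ?thesis .
qed

lemma SB_bg: "bigroupoid SB" unfolding bigroupoid_def
  apply (intro conjI)
  subgoal by (auto simp: split_paired_all)
  subgoal by (auto simp: split_paired_all)
  subgoal by (auto simp: split_paired_all hom2_def)
  subgoal by (auto elim!: hom2E simp: hom2_def)
  subgoal by (auto elim!: hom2E simp: vassoc)
  subgoal by (auto elim!: hom2E)
  subgoal
  proof (intro allI impI)
    fix f g \<alpha> assume "\<alpha> \<in> hom2 SB f g"
    then obtain X w Y w' b where h: "f = (X, w, Y)" "g = (X, w', Y)" "\<alpha> = (f, b, g)" "wfw X w" "Y = endp X w"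
     "wfw X w'" "Y = endp X w'" "b \<in> Cell B" "d2 b = ev X w" "c2 b = ev X w'" by (rule hom2E)
    show "\<exists>\<beta>\<in>hom2 SB g f. vcomp SB \<beta> \<alpha> = vid SB f \<and> vcomp SB \<alpha> \<beta> = vid SB g"
      by (rule bexI[of _ "(g, inv2 b, f)"]) (use h in \<open>auto simp: hom2_def\<close>)
  qed
  subgoal by (auto elim!: homE simp: hom_iff_S)
  subgoal by (auto elim!: hom2E simp: hom2_def)
  subgoal by (auto simp: split_paired_all)
  subgoal by (auto elim!: hom2E simp: interchange vassoc)
  subgoal by (auto simp: hom_iff_S)
  subgoal by (auto elim!: homE simp: hom_iff_S)
  subgoal by (auto elim!: hom2E simp: hom2_def)
  subgoal by (auto simp: split_paired_all)
  subgoal by (auto elim!: hom2E simp: rinv2_V vassoc)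
  subgoal by (auto simp: split_paired_all hom2_def Sasc_def)
  subgoal
  proof (intro allI impI)
    fix f f' g g' h h' \<alpha> \<beta> \<gamma>
    assume a: "\<alpha> \<in> hom2 SB f f'" and b: "\<beta> \<in> hom2 SB g g'" and c: "\<gamma> \<in> hom2 SB h h'"
      and fg: "tgt SB f = src SB g" and gh: "tgt SB g = src SB h"
    obtain X w1 Y w1' ma where A: "f = (X, w1, Y)" "f' = (X, w1', Y)" "\<alpha> = (f, ma, f')" "wfw X w1" "Y = endp X w1"
      "wfw X w1'" "Y = endp X w1'" "ma \<in> Cell B" "d2 ma = ev X w1" "c2 ma = ev X w1'" using a by (rule hom2E)
    obtain Y2 w2 Z w2' mb where Bb: "g = (Y2, w2, Z)" "g' = (Y2, w2', Z)" "\<beta> = (g, mb, g')" "wfw Y2 w2" "Z = endp Y2 w2"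
      "wfw Y2 w2'" "Z = endp Y2 w2'" "mb \<in> Cell B" "d2 mb = ev Y2 w2" "c2 mb = ev Y2 w2'" using b by (rule hom2E)
    obtain Z2 w3 W w3' mc where Cc: "h = (Z2, w3, W)" "h' = (Z2, w3', W)" "\<gamma> = (h, mc, h')" "wfw Z2 w3" "W = endp Z2 w3"
      "wfw Z2 w3'" "W = endp Z2 w3'" "mc \<in> Cell B" "d2 mc = ev Z2 w3" "c2 mc = ev Z2 w3'" using c by (rule hom2E)
    have Y2: "Y2 = Y" using fg A Bb by simp
    have Z2: "Z2 = Z" using gh Bb Cc by simp
    have key: "V (inv2 (kap X w1' (w2' @ w3'))) (V (H (V (inv2 (kap Y w2' w3')) (V (H mc mb) (kap Y w2 w3))) ma) (kap X w1 (w2 @ w3)))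
       = V (inv2 (kap X (w1' @ w2') w3')) (V (H mc (V (inv2 (kap X w1' w2')) (V (H mb ma) (kap X w1 w2)))) (kap X (w1 @ w2) w3))"
    proof (rule ascnat_abs[where Ea = "ev X w1" and Ea' = "ev X w1'" and Eb = "ev Y w2" and Eb' = "ev Y w2'"
          and Ec = "ev Z w3" and Ec' = "ev Z w3'" and Eabc = "ev X (w1 @ w2 @ w3)" and Ebc = "ev Y (w2 @ w3)"
          and Eab = "ev X (w1 @ w2)" and Eabc' = "ev X (w1' @ w2' @ w3')" and Ebc' = "ev Y (w2' @ w3')" and Eab' = "ev X (w1' @ w2')"])
      show "V (asc B (ev Z w3) (ev Y w2) (ev X w1)) (V (H (kap Y w2 w3) (I (ev X w1))) (kap X w1 (w2 @ w3))) =
            V (H (I (ev Z w3)) (kap X w1 w2)) (kap X (w1 @ w2) w3)"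
        using coh[of X w1 w2 w3] A Bb Cc Y2 Z2 by simp
      show "V (asc B (ev Z w3') (ev Y w2') (ev X w1')) (V (H (kap Y w2' w3') (I (ev X w1'))) (kap X w1' (w2' @ w3'))) =
            V (H (I (ev Z w3')) (kap X w1' w2')) (kap X (w1' @ w2') w3')"
        using coh[of X w1' w2' w3'] A Bb Cc Y2 Z2 by simp
    qed (use A Bb Cc Y2 Z2 in simp_all)
    show "vcomp SB (asc SB h' g' f') (hcomp2 SB (hcomp2 SB \<gamma> \<beta>) \<alpha>) = vcomp SB (hcomp2 SB \<gamma> (hcomp2 SB \<beta> \<alpha>)) (asc SB h g f)"
      using key A Bb Cc Y2 Z2 by (simp add: Sasc_def)
  qed
  subgoal by (auto simp: split_paired_all hom2_def)
  subgoal
  proof (intro allI impI)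
    fix f g \<alpha> assume a: "\<alpha> \<in> hom2 SB f g"
    obtain X w Y w' ma where A: "f = (X, w, Y)" "g = (X, w', Y)" "\<alpha> = (f, ma, g)" "wfw X w" "Y = endp X w"
      "wfw X w'" "Y = endp X w'" "ma \<in> Cell B" "d2 ma = ev X w" "c2 ma = ev X w'" using a by (rule hom2E)
    show "vcomp SB \<alpha> (lun SB f) = vcomp SB (lun SB g) (hcomp2 SB (vid SB (idn SB (tgt SB f))) \<alpha>)"
      using A lun_conj[of ma] by (simp add: kap_nil2')
  qed
  subgoal by (auto simp: split_paired_all hom2_def)
  subgoal
  proof (intro allI impI)
    fix f g \<alpha> assume a: "\<alpha> \<in> hom2 SB f g"
    obtain X w Y w' ma where A: "f = (X, w, Y)" "g = (X, w', Y)" "\<alpha> = (f, ma, g)" "wfw X w" "Y = endp X w"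
      "wfw X w'" "Y = endp X w'" "ma \<in> Cell B" "d2 ma = ev X w" "c2 ma = ev X w'" using a by (rule hom2E)
    show "vcomp SB \<alpha> (run SB f) = vcomp SB (run SB g) (hcomp2 SB \<alpha> (vid SB (idn SB (src SB f))))"
      using A run_conj[of ma] by simp
  qed
  subgoal by (auto simp: split_paired_all hom2_def Seps_def)
  subgoal
  proof (intro allI impI)
    fix f g \<alpha> assume a: "\<alpha> \<in> hom2 SB f g"
    obtain X w Y w' ma where A: "f = (X, w, Y)" "g = (X, w', Y)" "\<alpha> = (f, ma, g)" "wfw X w" "Y = endp X w"
      "wfw X w'" "Y = endp X w'" "ma \<in> Cell B" "d2 ma = ev X w" "c2 ma = ev X w'" using a by (rule hom2E)
    have key: "V (V (eps B (ev X w')) (V (H (inv2 (psi (X, w', Y))) (I (ev X w'))) (kap X w' (rw w'))))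
        (V (inv2 (kap X w' (rw w'))) (V (H (V (psi (X, w', Y)) (V (rinv2 B ma) (inv2 (psi (X, w, Y))))) ma) (kap X w (rw w))))
       = V (eps B (ev X w)) (V (H (inv2 (psi (X, w, Y))) (I (ev X w))) (kap X w (rw w)))"
      by (rule eps_abs[where Fs = "ev Y (rw w)" and Gs = "ev Y (rw w')"]) (use A in simp_all)
    show "vcomp SB (eps SB g) (hcomp2 SB (rinv2 SB \<alpha>) \<alpha>) = eps SB f"
      using key A by (simp add: Seps_def)
  qed
  subgoal by (auto simp: split_paired_all hom2_def Seta_def)
  subgoal
  proof (intro allI impI)
    fix f g \<alpha> assume a: "\<alpha> \<in> hom2 SB f g"
    obtain X w Y w' ma where A: "f = (X, w, Y)" "g = (X, w', Y)" "\<alpha> = (f, ma, g)" "wfw X w" "Y = endp X w"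
      "wfw X w'" "Y = endp X w'" "ma \<in> Cell B" "d2 ma = ev X w" "c2 ma = ev X w'" using a by (rule hom2E)
    have key: "V (V (inv2 (kap Y (rw w') w')) (V (H ma (V (psi (X, w', Y)) (V (rinv2 B ma) (inv2 (psi (X, w, Y)))))) (kap Y (rw w) w)))
        (V (inv2 (kap Y (rw w) w)) (V (H (I (ev X w)) (psi (X, w, Y))) (eta B (ev X w))))
       = V (inv2 (kap Y (rw w') w')) (V (H (I (ev X w')) (psi (X, w', Y))) (eta B (ev X w')))"
      by (rule eta_abs[where Fs = "ev Y (rw w)" and Gs = "ev Y (rw w')"]) (use A in simp_all)
    show "vcomp SB (hcomp2 SB \<alpha> (rinv2 SB \<alpha>)) (eta SB f) = eta SB g"
      using key A by (simp add: Seta_def)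
  qed
  subgoal by (auto simp: split_paired_all Sasc_def)
  subgoal by (auto simp: split_paired_all Sasc_def)
  subgoal
  proof
    fix f assume "f \<in> Arr SB"
    then obtain X w Y where A: "f = (X, w, Y)" "wfw X w" "Y = endp X w" by (cases f) auto
    have c: "V (asc B (ev X w) (ev Y (rw w)) (ev X w)) (V (H (kap Y (rw w) w) (I (ev X w))) (kap X w (rw w @ w)))
      = V (H (I (ev X w)) (kap X w (rw w))) (kap X (w @ rw w) w)"
    proof -
      have w2: "wfw (endp X w) (rw w)" using A(2) by simp
      have w3: "wfw (endp (endp X w) (rw w)) w" using A(2) by simp
      show ?thesis using coh[OF A(2) w2 w3] by (simp only: A(3)[symmetric] rw_endp'[OF A(2) A(3)])
    qed
    have key: "V (run B (ev X w)) (V (H (I (ev X w)) (V (eps B (ev X w)) (V (H (inv2 (psi (X, w, Y))) (I (ev X w))) (kap X w (rw w)))))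
       (V (kap X (w @ rw w) w) (V (inv2 (kap X w (rw w @ w))) (V (H (V (inv2 (kap Y (rw w) w)) (V (H (I (ev X w)) (psi (X, w, Y))) (eta B (ev X w)))) (I (ev X w))) (inv2 (lun B (ev X w)))))))
       = I (ev X w)"
      by (rule zig_abs[where Fs = "ev Y (rw w)" and EA = "ev X (w @ rw w)" and EB = "ev Y (rw w @ w)" and EC = "ev X (w @ rw w @ w)", OF _ _ _ _ _ _ _ _ _ _ _ _ _ _ _ _ c]) (use A in simp_all)
    show "vcomp SB (run SB f) (vcomp SB (hcomp2 SB (vid SB f) (eps SB f)) (vcomp SB (asc SB f (rinv SB f) f) (hcomp2 SB (eta SB f) (vid SB f)))) = lun SB f"
      using key A by (simp add: Seps_def Seta_def Sasc_def kap_nil2' vassoc)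
  qed
  done

end

context bg begin

lemma SB_au: "au_bigroupoid SB"
  unfolding au_bigroupoid_def using SB_bg by (auto simp: Sasc_def)

definition Emor where "Emor = \<lparr>F0 = id, F1 = Ev, F2 = (\<lambda>c. fst (snd c)), phi = (\<lambda>g f. inv2 (K f g)),
   phi0 = (\<lambda>X. I (idn B X)), phiI = psi\<rparr>"

lemma Emor_simps[simp]: "F0 Emor = id" "F1 Emor = Ev" "F2 Emor = (\<lambda>c. fst (snd c))" "phi Emor = (\<lambda>g f. inv2 (K f g))"
  "phi0 Emor = (\<lambda>X. I (idn B X))" "phiI Emor = psi"
  by (simp_all add: Emor_def)

lemma Seps_simp[simp]: "Seps (X, w, Y) = ((X, w @ rw w, X), V (eps B (ev X w)) (V (H (inv2 (psi (X, w, Y))) (I (ev X w))) (kap X w (rw w))), (X, [], X))"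
  by (simp add: Seps_def)
lemma Seta_simp[simp]: "Seta (X, w, Y) = ((Y, [], Y), V (inv2 (kap Y (rw w) w)) (V (H (I (ev X w)) (psi (X, w, Y))) (eta B (ev X w))), (Y, rw w @ w, Y))"
  by (simp add: Seta_def)
lemma Sasc_simp[simp]: "Sasc h g f = Svid (cat (cat h g) f)" by (simp add: Sasc_def)

lemma inv_coh: assumes C: "A \<in> Cell B" "P \<in> Cell B" "Q \<in> Cell B" "R \<in> Cell B" "S \<in> Cell B"
  and ty: "d2 A = c2 P" "d2 P = c2 Q" "d2 R = c2 S" "d2 Q = d2 S"
  and eq: "V A (V P Q) = V R S"
  shows "V (inv2 Q) (inv2 P) = V (inv2 S) (V (inv2 R) A)"
proof -
  have c2eq: "c2 A = c2 R" using eq C ty by (metis V_C V_c V_d)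
  have "inv2 (V (V A P) Q) = inv2 (V R S)" using eq C ty by (simp add: vassoc)
  then have "V (V (inv2 Q) (inv2 P)) (inv2 A) = V (inv2 S) (inv2 R)" using C ty c2eq by (simp add: inv2_V vassoc)
  then have "V (V (V (inv2 Q) (inv2 P)) (inv2 A)) A = V (V (inv2 S) (inv2 R)) A" by simp
  then show ?thesis using C ty c2eq by (simp add: vassoc)
qed

lemma E_morph: "bmorphism SB B Emor"
  unfolding bmorphism_def
  apply (intro conjI)
  subgoal by simp
  subgoal by (auto elim!: homE simp: hom_iff)
  subgoal by (auto elim!: hom2E simp: hom2_iff)
  subgoal by (auto simp: split_paired_all)
  subgoal by (auto elim!: hom2E)
  subgoal by (auto simp: split_paired_all hom2_iff)
  subgoal by (auto elim!: hom2E simp: vassoc)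
  subgoal by (simp add: hom2_iff)
  subgoal by (auto simp: split_paired_all hom2_iff)
  subgoal by (auto elim!: hom2E simp: vassoc)
  subgoal
  proof (intro allI impI)
    fix f g h assume f: "f \<in> Arr SB" and g: "g \<in> Arr SB" and h: "h \<in> Arr SB" and fg: "tgt SB f = src SB g" and gh: "tgt SB g = src SB h"
    obtain X w1 Y where F: "f = (X, w1, Y)" "wfw X w1" "Y = endp X w1" using f by (cases f) auto
    obtain w2 Z where G: "g = (Y, w2, Z)" "wfw Y w2" "Z = endp Y w2" using g fg F by (cases g) auto
    obtain w3 W where Hh: "h = (Z, w3, W)" "wfw Z w3" "W = endp Z w3" using h gh G by (cases h) auto
    have c: "V (asc B (ev Z w3) (ev Y w2) (ev X w1)) (V (H (kap Y w2 w3) (I (ev X w1))) (kap X w1 (w2 @ w3)))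
       = V (H (I (ev Z w3)) (kap X w1 w2)) (kap X (w1 @ w2) w3)"
      using coh[of X w1 w2 w3] F G Hh by simp
    have key: "V (inv2 (kap X w1 (w2 @ w3))) (inv2 (H (kap Y w2 w3) (I (ev X w1))))
      = V (inv2 (kap X (w1 @ w2) w3)) (V (inv2 (H (I (ev Z w3)) (kap X w1 w2))) (asc B (ev Z w3) (ev Y w2) (ev X w1)))"
      by (rule inv_coh[OF _ _ _ _ _ _ _ _ _ c]) (use F G Hh in simp_all)
    show "vcomp B (F2 Emor (asc SB h g f)) (vcomp B (phi Emor (hcomp SB h g) f) (hcomp2 B (phi Emor h g) (vid B (F1 Emor f))))
        = vcomp B (phi Emor h (hcomp SB g f)) (vcomp B (hcomp2 B (vid B (F1 Emor h)) (phi Emor g f)) (asc B (F1 Emor h) (F1 Emor g) (F1 Emor f)))"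
      using key F G Hh by (simp add: inv2_H)
  qed
  subgoal by (auto simp: split_paired_all)
  subgoal by (auto simp: split_paired_all kap_nil2')
  subgoal
  proof
    fix f assume "f \<in> Arr SB"
    then obtain X w Y where F: "f = (X, w, Y)" "wfw X w" "Y = endp X w" by (cases f) auto
    have m: "V (H (inv2 (psi (X, w, Y))) (I (ev X w))) (H (psi (X, w, Y)) (I (ev X w))) = I (hc (rinv B (ev X w)) (ev X w))"
      using F interchange[of "I (ev X w)" "I (ev X w)" "psi (X, w, Y)" "inv2 (psi (X, w, Y))"] by simp
    show "vcomp B (F2 Emor (eps SB f)) (vcomp B (phi Emor (rinv SB f) f) (hcomp2 B (phiI Emor f) (vid B (F1 Emor f))))
        = vcomp B (phi0 Emor (src SB f)) (eps B (F1 Emor f))"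
      using F m by (simp add: vassoc)
  qed
  subgoal by (auto simp: split_paired_all vassoc)
  done

end

context bg begin

definition S1 :: "'a \<Rightarrow> 'o \<times> ('a \<times> bool) list \<times> 'o" where "S1 f = (s f, [(f, True)], t f)"

definition Smor where "Smor = \<lparr>F0 = id, F1 = S1, F2 = (\<lambda>\<alpha>. (S1 (d2 \<alpha>), \<alpha>, S1 (c2 \<alpha>))),
   phi = (\<lambda>g f. ((s f, [(f, True), (g, True)], t g), I (hc g f), (s f, [(hc g f, True)], t g))),
   phi0 = (\<lambda>X. ((X, [], X), I (idn B X), (X, [(idn B X, True)], X))),
   phiI = (\<lambda>f. ((t f, [(f, False)], s f), I (rinv B f), (t f, [(rinv B f, True)], s f)))\<rparr>"

lemma Smor_simps[simp]: "F0 Smor = id" "F1 Smor = S1" "F2 Smor = (\<lambda>\<alpha>. (S1 (d2 \<alpha>), \<alpha>, S1 (c2 \<alpha>)))"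
  "phi Smor = (\<lambda>g f. ((s f, [(f, True), (g, True)], t g), I (hc g f), (s f, [(hc g f, True)], t g)))"
  "phi0 Smor = (\<lambda>X. ((X, [], X), I (idn B X), (X, [(idn B X, True)], X)))"
  "phiI Smor = (\<lambda>f. ((t f, [(f, False)], s f), I (rinv B f), (t f, [(rinv B f, True)], s f)))"
  by (simp_all add: Smor_def)

lemma lt_simps[simp]: "lt (f, True) = f" "lt (f, False) = rinv B f" "ls (f, True) = s f" "ls (f, False) = t f"
  "lg (f, True) = t f" "lg (f, False) = s f" "flip (f, b) = (f, \<not> b)"
  by (simp_all add: lt_def ls_def lg_def flip_def)

lemma psi_S: "f \<in> Arr B \<Longrightarrow> X = s f \<Longrightarrow> Y = t f \<Longrightarrow> psi (X, [(f, True)], Y) = I (rinv B f)"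
  by (simp add: psi_def rw_def)

lemma S_morph: "bmorphism B SB Smor"
  unfolding bmorphism_def
  apply (intro conjI)
  subgoal by simp
  subgoal by (auto simp: S1_def hom_iff hom_iff_S)
  subgoal by (auto simp: S1_def hom2_iff hom2_def)
  subgoal by (auto simp: S1_def)
  subgoal by (auto simp: S1_def hom2_iff)
  subgoal by (auto simp: hom2_def S1_def)
  subgoal by (auto simp: S1_def hom2_iff)
  subgoal by (auto simp: hom2_def S1_def)
  subgoal by (auto simp: hom2_def S1_def rw_def)
  subgoal by (auto simp: S1_def hom2_iff psi_S rw_def)
  subgoal by (auto simp: S1_def)
  subgoal by (auto simp: S1_def)
  subgoal by (auto simp: S1_def)
  subgoal by (auto simp: S1_def psi_S rw_def)
  subgoal by (auto simp: S1_def psi_S rw_def)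
  done

lemma E_hom_eq: assumes X: "X \<in> Obj B" and X': "X' \<in> Obj B" shows "hom_equivalence SB B Emor X X'"
  unfolding hom_equivalence_def
proof (intro exI conjI)
  let ?G1 = "\<lambda>h. (X, [(h, True)], X')"
  let ?G2 = "\<lambda>\<gamma>. (?G1 (d2 \<gamma>), \<gamma>, ?G1 (c2 \<gamma>))"
  let ?u = "\<lambda>f. (f, I (Ev f), ?G1 (Ev f))"
  let ?c = "\<lambda>h. I h"
  show "\<forall>h\<in>hom B (F0 Emor X) (F0 Emor X'). ?G1 h \<in> hom SB X X'" by (auto simp: hom_iff hom_iff_S)
  show "\<forall>h h' \<gamma>. h \<in> hom B (F0 Emor X) (F0 Emor X') \<longrightarrow> \<gamma> \<in> hom2 B h h' \<longrightarrow> ?G2 \<gamma> \<in> hom2 SB (?G1 h) (?G1 h')"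
    by (auto simp: hom_iff hom2_iff hom2_def)
  show "\<forall>h\<in>hom B (F0 Emor X) (F0 Emor X'). ?G2 (vid B h) = vid SB (?G1 h)" by (auto simp: hom_iff)
  show "\<forall>h h' h'' \<gamma> \<delta>. h \<in> hom B (F0 Emor X) (F0 Emor X') \<longrightarrow> \<gamma> \<in> hom2 B h h' \<longrightarrow> \<delta> \<in> hom2 B h' h'' \<longrightarrow>
      ?G2 (vcomp B \<delta> \<gamma>) = vcomp SB (?G2 \<delta>) (?G2 \<gamma>)" by (auto simp: hom_iff hom2_iff)
  show "\<forall>f\<in>hom SB X X'. ?u f \<in> hom2 SB f (?G1 (F1 Emor f))" by (auto elim!: homE simp: hom2_def)
  show "\<forall>f g \<alpha>. f \<in> hom SB X X' \<longrightarrow> \<alpha> \<in> hom2 SB f g \<longrightarrow>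
      vcomp SB (?G2 (F2 Emor \<alpha>)) (?u f) = vcomp SB (?u g) \<alpha>" by (auto elim!: hom2E)
  show "\<forall>h\<in>hom B (F0 Emor X) (F0 Emor X'). ?c h \<in> hom2 B (F1 Emor (?G1 h)) h" by (auto simp: hom_iff hom2_iff)
  show "\<forall>h h' \<gamma>. h \<in> hom B (F0 Emor X) (F0 Emor X') \<longrightarrow> \<gamma> \<in> hom2 B h h' \<longrightarrow>
      vcomp B \<gamma> (?c h) = vcomp B (?c h') (F2 Emor (?G2 \<gamma>))" by (auto simp: hom_iff hom2_iff)
qed

lemma S_hom_eq: assumes X: "X \<in> Obj B" and X': "X' \<in> Obj B" shows "hom_equivalence B SB Smor X X'"
  unfolding hom_equivalence_def
proof (intro exI conjI)
  let ?G1 = "Ev"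
  let ?G2 = "\<lambda>c. fst (snd c)"
  let ?u = "\<lambda>f. I f"
  let ?c = "\<lambda>h. (S1 (Ev h), I (Ev h), h)"
  show "\<forall>h\<in>hom SB (F0 Smor X) (F0 Smor X'). ?G1 h \<in> hom B X X'" by (auto elim!: homE simp: hom_iff)
  show "\<forall>h h' \<gamma>. h \<in> hom SB (F0 Smor X) (F0 Smor X') \<longrightarrow> \<gamma> \<in> hom2 SB h h' \<longrightarrow> ?G2 \<gamma> \<in> hom2 B (?G1 h) (?G1 h')"
    by (auto elim!: hom2E simp: hom2_iff)
  show "\<forall>h\<in>hom SB (F0 Smor X) (F0 Smor X'). ?G2 (vid SB h) = vid B (?G1 h)" by (auto elim!: homE)
  show "\<forall>h h' h'' \<gamma> \<delta>. h \<in> hom SB (F0 Smor X) (F0 Smor X') \<longrightarrow> \<gamma> \<in> hom2 SB h h' \<longrightarrow> \<delta> \<in> hom2 SB h' h'' \<longrightarrow>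
      ?G2 (vcomp SB \<delta> \<gamma>) = vcomp B (?G2 \<delta>) (?G2 \<gamma>)" by (auto elim!: hom2E)
  show "\<forall>f\<in>hom B X X'. ?u f \<in> hom2 B f (?G1 (F1 Smor f))" by (auto simp: hom_iff hom2_iff S1_def)
  show "\<forall>f g \<alpha>. f \<in> hom B X X' \<longrightarrow> \<alpha> \<in> hom2 B f g \<longrightarrow>
      vcomp B (?G2 (F2 Smor \<alpha>)) (?u f) = vcomp B (?u g) \<alpha>" by (auto simp: hom_iff hom2_iff)
  show "\<forall>h\<in>hom SB (F0 Smor X) (F0 Smor X'). ?c h \<in> hom2 SB (F1 Smor (?G1 h)) h" by (auto elim!: homE simp: hom2_def S1_def)
  show "\<forall>h h' \<gamma>. h \<in> hom SB (F0 Smor X) (F0 Smor X') \<longrightarrow> \<gamma> \<in> hom2 SB h h' \<longrightarrow>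
      vcomp SB \<gamma> (?c h) = vcomp SB (?c h') (F2 Smor (?G2 \<gamma>))" by (auto elim!: hom2E simp: S1_def)
qed

lemma E_weq: "weak_equivalence SB B Emor"
  unfolding weak_equivalence_def
proof (intro conjI ballI)
  show "bmorphism SB B Emor" by (rule E_morph)
next
  fix Y assume Y: "Y \<in> Obj B"
  have "idn B Y \<in> hom B Y Y" using Y by (simp add: hom_iff)
  then show "\<exists>X\<in>Obj SB. hom B Y (F0 Emor X) \<noteq> {}"
    using Y by (intro bexI[of _ Y]) auto
next
  fix X X' assume "X \<in> Obj SB" "X' \<in> Obj SB"
  then show "hom_equivalence SB B Emor X X'" by (intro E_hom_eq) auto
qed

lemma S_weq: "weak_equivalence B SB Smor"
  unfolding weak_equivalence_def
proof (intro conjI ballI)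
  show "bmorphism B SB Smor" by (rule S_morph)
next
  fix Y assume Y: "Y \<in> Obj SB"
  have "(Y, [], Y) \<in> hom SB Y Y" using Y by (simp add: hom_iff_S)
  then show "\<exists>X\<in>Obj B. hom SB Y (F0 Smor X) \<noteq> {}"
    using Y by (intro bexI[of _ Y]) auto
next
  fix X X' assume "X \<in> Obj B" "X' \<in> Obj B"
  then show "hom_equivalence B SB Smor X X'" by (intro S_hom_eq) auto
qed

end

theorem lemmaB2:
  fixes B :: "('o, 'a, 'b) bigroupoid"
  assumes "bigroupoid B"
  shows "\<exists>(SB :: ('o, 'o \<times> ('a \<times> bool) list \<times> 'o,
                  ('o \<times> ('a \<times> bool) list \<times> 'o) \<times> 'b \<times> ('o \<times> ('a \<times> bool) list \<times> 'o)) bigroupoid)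
            E S.
           au_bigroupoid SB \<and> weak_equivalence SB B E \<and> weak_equivalence B SB S"
proof -
  interpret bg B by (rule bg.intro[OF assms])
  show ?thesis using SB_au E_weq S_weq by blast
qed


end
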